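(* Let $\mathcal W$ be the even part of $W(m,n;\underline t)$ over a field of characteristic $p>3$, $m,n\ge3$. If $q=p^r$ for some $r\in\mathbb N$ (i.e. $r\ge1$), then $\mathrm{Der}_{-q}(\mathcal W)=\mathrm{span}_{\mathbb F}\{(\mathrm{ad}\,D_i)^q\mid i\in Y_0\}$.
   Context: $\mathbb F$ is a field of characteristic $p>3$; $m,n\ge 3$; $\underline t=(t_1,\dots,t_m)$ positive integers, $\pi_i=p^{t_i}-1$. $Y_0=\{1,\dots,m\}$, $Y_1=\{m+1,\dots,m+n\}$, $Y=Y_0\cup Y_1$, $\tau(r)=\bar0$ on $Y_0$, $\bar1$ on $Y_1$. $\mathfrak A=\mathfrak A(m,n;\underline t)$ is the supercommutative superalgebra with basis $x^{(\alpha)}x^u$ ($\alpha\in\mathbb N_0^m$, $\alpha_i\le\pi_i$; $u$ an increasing sequence in $Y_1$, $x^u$ the product of odd generators $x_k$, $k\in u$), divided-power multiplication (zero if some index exceeds $\pi_i$), anticommuting $x_k$, parity $|u|\bmod 2$. $D_i$ ($i\in Y_0$) sends $x^{(\alpha)}x^u\mapsto x^{(\alpha-\varepsilon_i)}x^u$, $D_k$ ($k\in Y_1$) is the odd partial derivative $\partial/\partial x_k$. $W=\{\sum_{r\in Y}f_rD_r:f_r\in\mathfrak A\}$ with bracket $[fD_r,gD_s]=fD_r(g)D_s-(-1)^{\mathrm p(fD_r)\mathrm p(gD_s)}gD_s(f)D_r$; $x^{(\alpha)}x^uD_r$ has parity $|u|+\tau(r)$ and $\mathbb Z$-degree $|\alpha|+|u|-1$.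 $\mathcal W=W_{\bar0}=\bigoplus_{i\ge-1}\mathcal W_i$ with the induced $\mathbb Z$-grading. $\mathrm{Der}_{-q}(\mathcal W)$ is the space of derivations $D$ of $\mathcal W$ with $D(\mathcal W_i)\subset\mathcal W_{i-q}$ for all $i$; $\mathrm{ad}\,D_i$ is $X\mapsto[D_i,X]$ on $\mathcal W$. *)

theory Defs
  imports Main
begin

text \<open>Basis index of the divided power superalgebra A(m,n;t): a pair (alpha, u),
  alpha : nat => nat an exponent vector supported on Y0 = {1..m} with alpha i <= p^(t i) - 1,
  u a subset of Y1 = {m+1..m+n} (an increasing sequence = a subset).
  Elements of A are functions idx => F vanishing outside the index set.\<close>

type_synonym aidx = "(nat \<Rightarrow> nat) \<times> nat set"
type_synonym widx = "(nat \<Rightarrow> nat) \<times> nat set \<times> nat"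

definition Aidx :: "nat \<Rightarrow> nat \<Rightarrow> nat \<Rightarrow> (nat \<Rightarrow> nat) \<Rightarrow> aidx set" where
  "Aidx p m n t = {(\<alpha>, u). (\<forall>i. (i \<in> {1..m} \<longrightarrow> \<alpha> i \<le> p ^ t i - 1) \<and> (i \<notin> {1..m} \<longrightarrow> \<alpha> i = 0))
                           \<and> u \<subseteq> {m+1..m+n}}"

definition amono :: "aidx \<Rightarrow> aidx \<Rightarrow> 'a::field" where
  "amono b = (\<lambda>c. if c = b then 1 else 0)"

text \<open>Sign of x^u x^v = sign * x^(u Un v) for disjoint u, v.\<close>
definition osign :: "nat set \<Rightarrow> nat set \<Rightarrow> 'a::field" where
  "osign u v = (-1) ^ card {(k, l). k \<in> u \<and> l \<in> v \<and> l < k}"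

text \<open>Product of two basis monomials (divided powers, anticommuting odd generators).\<close>
definition amul_basis :: "nat \<Rightarrow> nat \<Rightarrow> nat \<Rightarrow> (nat \<Rightarrow> nat) \<Rightarrow> aidx \<Rightarrow> aidx \<Rightarrow> aidx \<Rightarrow> 'a::field" where
  "amul_basis p m n t b1 b2 =
     (case b1 of (\<alpha>, u) \<Rightarrow> case b2 of (\<beta>, v) \<Rightarrow>
       if (\<lambda>i. \<alpha> i + \<beta> i, u \<union> v) \<in> Aidx p m n t \<and> u \<inter> v = {}
       then (\<lambda>c. (\<Prod>i\<in>{1..m}. of_nat ((\<alpha> i + \<beta> i) choose \<alpha> i)) * osign u v * amono (\<lambda>i. \<alpha> i + \<beta> i, u \<union> v) c)
       else (\<lambda>c. 0))"

definition amul :: "nat \<Rightarrow> nat \<Rightarrow> nat \<Rightarrow> (nat \<Rightarrow> nat) \<Rightarrow> (aidx \<Rightarrow> 'a::field) \<Rightarrow> (aidx \<Rightarrow> 'a) \<Rightarrow> aidx \<Rightarrow> 'a" where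
  "amul p m n t f g = (\<lambda>c. \<Sum>b1\<in>Aidx p m n t. \<Sum>b2\<in>Aidx p m n t. f b1 * g b2 * amul_basis p m n t b1 b2 c)"

text \<open>The partial derivatives D_r on basis monomials: D_i (i in Y0) lowers alpha i,
  D_k (k in Y1) is the odd left derivative d/dx_k.\<close>
definition Dbasis :: "nat \<Rightarrow> nat \<Rightarrow> nat \<Rightarrow> aidx \<Rightarrow> aidx \<Rightarrow> 'a::field" where
  "Dbasis m n r b =
     (case b of (\<alpha>, u) \<Rightarrow>
       if r \<in> {1..m} then (if 1 \<le> \<alpha> r then amono (\<alpha>(r := \<alpha> r - 1), u) else (\<lambda>c. 0))
       else if r \<in> {m+1..m+n} then
         (if r \<in> u then (\<lambda>c. (-1) ^ card {l \<in> u. l < r} * amono (\<alpha>, u - {r}) c) else (\<lambda>c. 0))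
       else (\<lambda>c. 0))"

definition Widx :: "nat \<Rightarrow> nat \<Rightarrow> nat \<Rightarrow> (nat \<Rightarrow> nat) \<Rightarrow> widx set" where
  "Widx p m n t = {(\<alpha>, u, r). (\<alpha>, u) \<in> Aidx p m n t \<and> r \<in> {1..m+n}}"

definition tau :: "nat \<Rightarrow> nat \<Rightarrow> nat" where
  "tau m r = (if r \<le> m then 0 else 1)"

text \<open>Bracket of two basis elements x^(alpha)x^u D_r and x^(beta)x^v D_s of W.\<close>
definition wbr_basis :: "nat \<Rightarrow> nat \<Rightarrow> nat \<Rightarrow> (nat \<Rightarrow> nat) \<Rightarrow> widx \<Rightarrow> widx \<Rightarrow> widx \<Rightarrow> 'a::field" where
  "wbr_basis p m n t b1 b2 =
     (case b1 of (\<alpha>, u, r) \<Rightarrow> case b2 of (\<beta>, v, s) \<Rightarrow>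
       (\<lambda>(\<gamma>, w, s').
          (if s' = s then amul p m n t (amono (\<alpha>, u)) (Dbasis m n r (\<beta>, v)) (\<gamma>, w) else 0)
          - (-1) ^ ((card u + tau m r) * (card v + tau m s))
            * (if s' = r then amul p m n t (amono (\<beta>, v)) (Dbasis m n s (\<alpha>, u)) (\<gamma>, w) else 0)))"

definition wbr :: "nat \<Rightarrow> nat \<Rightarrow> nat \<Rightarrow> (nat \<Rightarrow> nat) \<Rightarrow> (widx \<Rightarrow> 'a::field) \<Rightarrow> (widx \<Rightarrow> 'a) \<Rightarrow> widx \<Rightarrow> 'a" where
  "wbr p m n t X Y = (\<lambda>c. \<Sum>b1\<in>Widx p m n t. \<Sum>b2\<in>Widx p m n t. X b1 * Y b2 * wbr_basis p m n t b1 b2 c)"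

definition wdeg :: "nat \<Rightarrow> widx \<Rightarrow> int" where
  "wdeg m b = (case b of (\<alpha>, u, r) \<Rightarrow> int (\<Sum>i\<in>{1..m}. \<alpha> i) + int (card u) - 1)"

definition Weven :: "nat \<Rightarrow> nat \<Rightarrow> nat \<Rightarrow> (nat \<Rightarrow> nat) \<Rightarrow> (widx \<Rightarrow> 'a::field) set" where
  "Weven p m n t = {X. (\<forall>b. b \<notin> Widx p m n t \<longrightarrow> X b = 0)
      \<and> (\<forall>\<alpha> u r. X (\<alpha>, u, r) \<noteq> 0 \<longrightarrow> even (card u + tau m r))}"

definition Wcomp :: "nat \<Rightarrow> nat \<Rightarrow> nat \<Rightarrow> (nat \<Rightarrow> nat) \<Rightarrow> int \<Rightarrow> (widx \<Rightarrow> 'a::field) set" where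
  "Wcomp p m n t i = {X \<in> Weven p m n t. \<forall>b. X b \<noteq> 0 \<longrightarrow> wdeg m b = i}"

definition Der_neg :: "nat \<Rightarrow> nat \<Rightarrow> nat \<Rightarrow> (nat \<Rightarrow> nat) \<Rightarrow> nat \<Rightarrow> ((widx \<Rightarrow> 'a::field) \<Rightarrow> (widx \<Rightarrow> 'a)) set" where
  "Der_neg p m n t q = {D.
      (\<forall>X\<in>Weven p m n t. D X \<in> Weven p m n t)
    \<and> (\<forall>X\<in>Weven p m n t. \<forall>Y\<in>Weven p m n t. D (\<lambda>c. X c + Y c) = (\<lambda>c. D X c + D Y c))
    \<and> (\<forall>a. \<forall>X\<in>Weven p m n t. D (\<lambda>c. a * X c) = (\<lambda>c. a * D X c))
    \<and> (\<forall>X\<in>Weven p m n t. \<forall>Y\<in>Weven p m n t.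
          D (wbr p m n t X Y) = (\<lambda>c. wbr p m n t (D X) Y c + wbr p m n t X (D Y) c))
    \<and> (\<forall>i. \<forall>X\<in>Wcomp p m n t i. D X \<in> Wcomp p m n t (i - int q))}"

definition Dvec :: "nat \<Rightarrow> widx \<Rightarrow> 'a::field" where
  "Dvec i = (\<lambda>(\<alpha>, u, r). if \<alpha> = (\<lambda>_. 0) \<and> u = {} \<and> r = i then 1 else 0)"

end

theory Submission
  imports Defs "HOL-Computational_Algebra.Computational_Algebra"
begin

definition evb :: "widx \<Rightarrow> widx \<Rightarrow> 'a::field" where
  "evb b = (\<lambda>c. if c = b then 1 else 0)"

definition shiftW :: "nat \<Rightarrow> nat \<Rightarrow> nat \<Rightarrow> (nat \<Rightarrow> nat) \<Rightarrow> nat \<Rightarrow> nat \<Rightarrow> (widx \<Rightarrow> 'a) \<Rightarrow> widx \<Rightarrow> 'a::field" where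
  "shiftW p m n t i N X = (\<lambda>(\<gamma>, w, s). if (\<gamma>(i := \<gamma> i + N), w, s) \<in> Widx p m n t then X (\<gamma>(i := \<gamma> i + N), w, s) else 0)"

lemma Aidx_iff: "(\<alpha>, u) \<in> Aidx p m n t \<longleftrightarrow> (\<forall>i. (i \<in> {1..m} \<longrightarrow> \<alpha> i \<le> p ^ t i - 1) \<and> (i \<notin> {1..m} \<longrightarrow> \<alpha> i = 0)) \<and> u \<subseteq> {m+1..m+n}"
  by (simp add: Aidx_def)

lemma Widx_iff: "(\<alpha>, u, r) \<in> Widx p m n t \<longleftrightarrow> (\<alpha>, u) \<in> Aidx p m n t \<and> r \<in> {1..m+n}"
  by (simp add: Widx_def)

lemma finite_Aidx: "finite (Aidx p m n t)"
proof -
  let ?F = "{f. \<forall>x. (x \<in> {1..m} \<longrightarrow> f x \<in> {0..Max ((\<lambda>i. p ^ t i) ` {1..m})}) \<and> (x \<notin> {1..m} \<longrightarrow> f x = (0::nat))}"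
  have "finite ?F" by (rule finite_set_of_finite_funs) auto
  moreover have "Aidx p m n t \<subseteq> ?F \<times> Pow {m+1..m+n}"
  proof
    fix x assume "x \<in> Aidx p m n t"
    then obtain \<alpha> u where x: "x = (\<alpha>, u)" and h: "(\<alpha>, u) \<in> Aidx p m n t" by (cases x) auto
    have "\<alpha> i \<le> Max ((\<lambda>i. p ^ t i) ` {1..m})" if "i \<in> {1..m}" for i
    proof -
      have "\<alpha> i \<le> p ^ t i - 1" using h that by (auto simp: Aidx_iff)
      also have "\<dots> \<le> p ^ t i" by simp
      also have "\<dots> \<le> Max ((\<lambda>i. p ^ t i) ` {1..m})" using that by (intro Max_ge) auto
      finally show ?thesis .
    qed
    then show "x \<in> ?F \<times> Pow {m+1..m+n}" using h x by (auto simp: Aidx_iff)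
  qed
  ultimately show ?thesis by (meson finite_SigmaI finite_Pow_iff finite_atLeastAtMost finite_subset)
qed

lemma finite_Widx: "finite (Widx p m n t)"
proof -
  have "Widx p m n t \<subseteq> (fst ` Aidx p m n t) \<times> ((snd ` Aidx p m n t) \<times> {1..m+n})"
    by (force simp: Widx_def image_iff)
  then show ?thesis using finite_Aidx by (meson finite_SigmaI finite_atLeastAtMost finite_imageI finite_subset)
qed

lemma sum_delta_unique:
  assumes "finite A" "\<And>b. b \<in> A \<Longrightarrow> P b \<longleftrightarrow> b = b0"
  shows "(\<Sum>b\<in>A. if P b then f b else 0) = (if b0 \<in> A then f b0 else 0)"
proof -
  have "(\<Sum>b\<in>A. if P b then f b else 0) = (\<Sum>b\<in>A. if b = b0 then f b else 0)"
    using assms(2) by (intro sum.cong) auto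
  also have "\<dots> = (if b0 \<in> A then f b0 else 0)" using assms(1) by (simp add: sum.delta')
  finally show ?thesis .
qed

lemma wbr_evb:
  assumes "b1 \<in> Widx p m n t" "b2 \<in> Widx p m n t"
  shows "wbr p m n t (evb b1) (evb b2) = (wbr_basis p m n t b1 b2 :: widx \<Rightarrow> 'a::field)"
proof
  fix c
  have "wbr p m n t (evb b1) (evb b2) c =
     (\<Sum>x\<in>Widx p m n t. if x = b1 then (\<Sum>y\<in>Widx p m n t. if y = b2 then wbr_basis p m n t x y c else 0) else (0::'a))"
    unfolding wbr_def evb_def by (intro sum.cong refl) (auto intro!: sum.cong)
  also have "\<dots> = wbr_basis p m n t b1 b2 c"
    using assms finite_Widx by (simp add: sum.delta')
  finally show "wbr p m n t (evb b1) (evb b2) c = (wbr_basis p m n t b1 b2 c :: 'a)" .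
qed

lemma Dvec_evb: "Dvec i = evb (\<lambda>_. 0, {}, i)"
  by (auto simp: Dvec_def evb_def fun_eq_iff)

lemma amul_amono:
  assumes "a \<in> Aidx p m n t"
  shows "amul p m n t (amono a) g = (\<lambda>c. \<Sum>b\<in>Aidx p m n t. g b * amul_basis p m n t a b c)"
proof
  fix c
  have "amul p m n t (amono a) g c = (\<Sum>x\<in>Aidx p m n t. if x = a then (\<Sum>b\<in>Aidx p m n t. g b * amul_basis p m n t x b c) else 0)"
    unfolding amul_def amono_def by (intro sum.cong refl) (auto simp: sum_distrib_left)
  also have "\<dots> = (\<Sum>b\<in>Aidx p m n t. g b * amul_basis p m n t a b c)"
    using assms finite_Aidx by (simp add: sum.delta')
  finally show "amul p m n t (amono a) g c = (\<Sum>b\<in>Aidx p m n t. g b * amul_basis p m n t a b c)" .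
qed

lemma amul_amono_amono:
  assumes "a \<in> Aidx p m n t" "b \<in> Aidx p m n t"
  shows "amul p m n t (amono a) (amono b) = (amul_basis p m n t a b :: aidx \<Rightarrow> 'a::field)"
proof
  fix c
  have "(\<Sum>ba\<in>Aidx p m n t. amono b ba * amul_basis p m n t a ba c) = (\<Sum>ba\<in>Aidx p m n t. if ba = b then amul_basis p m n t a ba c else (0::'a))"
    by (intro sum.cong) (auto simp: amono_def)
  then show "amul p m n t (amono a) (amono b) c = (amul_basis p m n t a b c :: 'a)"
    using assms finite_Aidx by (simp add: amul_amono sum.delta')
qed

lemma amul_amono_smul:
  assumes "a \<in> Aidx p m n t" "b \<in> Aidx p m n t"
  shows "amul p m n t (amono a) (\<lambda>c. \<sigma> * amono b c) = (\<lambda>c. \<sigma> * (amul_basis p m n t a b c :: 'a::field))"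
proof
  fix c
  have "(\<Sum>ba\<in>Aidx p m n t. \<sigma> * amono b ba * amul_basis p m n t a ba c) = (\<Sum>ba\<in>Aidx p m n t. if ba = b then \<sigma> * amul_basis p m n t a ba c else (0::'a))"
    by (intro sum.cong) (auto simp: amono_def)
  then show "amul p m n t (amono a) (\<lambda>c. \<sigma> * amono b c) c = \<sigma> * (amul_basis p m n t a b c :: 'a)"
    using assms finite_Aidx by (simp add: amul_amono sum.delta')
qed

lemma amul_zero2: "amul p m n t f (\<lambda>c. 0) = (\<lambda>c. (0::'a::field))"
  by (simp add: amul_def)

lemma osign_empty1 [simp]: "osign {} v = 1"
  by (simp add: osign_def)
lemma osign_empty2 [simp]: "osign u {} = 1"
  by (simp add: osign_def)

lemma Dbasis_zero [simp]: "Dbasis m n s (\<lambda>_. 0, {}) = (\<lambda>c. 0)"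
  by (simp add: Dbasis_def)


lemma zero_Aidx [simp]: "(\<lambda>_. 0, {}) \<in> Aidx p m n t"
  by (simp add: Aidx_iff)

lemma amul_basis_zero_left:
  assumes "b \<in> Aidx p m n t"
  shows "amul_basis p m n t (\<lambda>_. 0, {}) b = (amono b :: aidx \<Rightarrow> 'a::field)"
  using assms by (cases b) (simp add: amul_basis_def)

lemma Dbasis_even:
  assumes "i \<in> {1..m}"
  shows "Dbasis m n i (\<beta>, v) = (if 1 \<le> \<beta> i then amono (\<beta>(i := \<beta> i - 1), v) else (\<lambda>c. 0))"
  using assms by (simp add: Dbasis_def)

lemma Aidx_dec:
  assumes "(\<beta>, v) \<in> Aidx p m n t"
  shows "(\<beta>(i := \<beta> i - k), v) \<in> Aidx p m n t"
  using assms unfolding Aidx_iff by (auto simp: le_diff_conv)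

lemma wbr_basis_D:
  assumes "i \<in> {1..m}" "(\<beta>, v, s) \<in> Widx p m n t"
  shows "wbr_basis p m n t (\<lambda>_. 0, {}, i) (\<beta>, v, s) (\<gamma>, w, s') =
     (if s' = s \<and> 1 \<le> \<beta> i \<and> \<gamma> = \<beta>(i := \<beta> i - 1) \<and> w = v then 1 else (0::'a::field))"
proof -
  have A: "(\<beta>, v) \<in> Aidx p m n t" using assms(2) by (simp add: Widx_iff)
  have B: "(\<beta>(i := \<beta> i - 1), v) \<in> Aidx p m n t" using Aidx_dec[OF A] .
  have H: "amul p m n t (amono (\<lambda>_. 0, {})) (Dbasis m n i (\<beta>, v)) = (if 1 \<le> \<beta> i then amono (\<beta>(i := \<beta> i - 1), v) else (\<lambda>c. 0::'a))"
    by (cases "1 \<le> \<beta> i") (simp_all add: Dbasis_even[OF assms(1)] amul_amono_amono[OF zero_Aidx B] amul_basis_zero_left[OF B] amul_zero2 del: One_nat_def)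
  show ?thesis
    unfolding wbr_basis_def by (simp add: H amul_zero2 del: One_nat_def) (auto simp: amono_def)
qed

lemma wbr_Dvec:
  assumes "i \<in> {1..m}"
  shows "wbr p m n t (Dvec i) X = shiftW p m n t i 1 (X :: widx \<Rightarrow> 'a::field)"
proof
  fix c :: widx
  obtain \<gamma> w s' where c: "c = (\<gamma>, w, s')" by (cases c) auto
  have z: "(\<lambda>_. 0, {}, i) \<in> Widx p m n t" using assms by (simp add: Widx_iff)
  have "wbr p m n t (Dvec i) X c = (\<Sum>b1\<in>Widx p m n t. if b1 = (\<lambda>_. 0, {}, i) then
          (\<Sum>b2\<in>Widx p m n t. X b2 * wbr_basis p m n t b1 b2 c) else 0)"
    unfolding wbr_def Dvec_evb evb_def by (intro sum.cong refl) (auto simp: sum_distrib_left)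
  also have "\<dots> = (\<Sum>b2\<in>Widx p m n t. X b2 * wbr_basis p m n t (\<lambda>_. 0, {}, i) b2 c)"
    using z finite_Widx by (simp add: sum.delta')
  also have "\<dots> = (\<Sum>b2\<in>Widx p m n t. if (case b2 of (\<beta>, v, s) \<Rightarrow> s' = s \<and> 1 \<le> \<beta> i \<and> \<gamma> = \<beta>(i := \<beta> i - 1) \<and> w = v)
         then X b2 else 0)"
  proof (rule sum.cong[OF refl])
    fix b assume bW: "b \<in> Widx p m n t"
    obtain \<beta> v s where b: "b = (\<beta>, v, s)" by (cases b) auto
    show "X b * wbr_basis p m n t (\<lambda>_. 0, {}, i) b c = (if (case b of (\<beta>, v, s) \<Rightarrow> s' = s \<and> 1 \<le> \<beta> i \<and> \<gamma> = \<beta>(i := \<beta> i - 1) \<and> w = v)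
         then X b else 0)"
      using bW unfolding b c by (simp add: wbr_basis_D[OF assms] del: One_nat_def)
  qed
  also have "\<dots> = (if (\<gamma>(i := \<gamma> i + 1), w, s') \<in> Widx p m n t then X (\<gamma>(i := \<gamma> i + 1), w, s') else 0)"
  proof (rule sum_delta_unique[OF finite_Widx])
    fix b assume "b \<in> Widx p m n t"
    obtain \<beta> v s where b: "b = (\<beta>, v, s)" by (cases b) auto
    show "(case b of (\<beta>, v, s) \<Rightarrow> s' = s \<and> 1 \<le> \<beta> i \<and> \<gamma> = \<beta>(i := \<beta> i - 1) \<and> w = v) \<longleftrightarrow> b = (\<gamma>(i := \<gamma> i + 1), w, s')"
      unfolding b by (auto simp: fun_eq_iff split: if_splits)
  qed
  also have "\<dots> = shiftW p m n t i 1 X c" by (simp add: shiftW_def c)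
  finally show "wbr p m n t (Dvec i) X c = shiftW p m n t i 1 X c" .
qed

lemma Aidx_shift_down:
  assumes "(\<gamma>(i := \<gamma> i + N), w) \<in> Aidx p m n t" "k \<le> N"
  shows "(\<gamma>(i := \<gamma> i + k), w) \<in> Aidx p m n t"
  using assms unfolding Aidx_iff by (auto split: if_splits)

lemma shiftW_iter:
  assumes "i \<in> {1..m}"
  shows "(wbr p m n t (Dvec i) ^^ Suc N) X = shiftW p m n t i (Suc N) (X :: widx \<Rightarrow> 'a::field)"
proof (induction N)
  case 0
  show ?case using wbr_Dvec[OF assms] by simp
next
  case (Suc N)
  show ?case
  proof
    fix c :: widx
    obtain \<gamma> w s' where c: "c = (\<gamma>, w, s')" by (cases c) auto
    have e: "(\<gamma>(i := \<gamma> i + 1))(i := \<gamma> i + 1 + Suc N) = \<gamma>(i := \<gamma> i + Suc (Suc N))" by (simp add: fun_eq_iff)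
    have f: "(wbr p m n t (Dvec i) ^^ Suc (Suc N)) X = wbr p m n t (Dvec i) ((wbr p m n t (Dvec i) ^^ Suc N) X)"
      by simp
    show "(wbr p m n t (Dvec i) ^^ Suc (Suc N)) X c = shiftW p m n t i (Suc (Suc N)) X c"
      unfolding f Suc wbr_Dvec[OF assms]
      using Aidx_shift_down[of \<gamma> i "Suc (Suc N)" w p m n t 1]
      by (auto simp: shiftW_def c e Widx_iff simp del: funpow.simps)
  qed
qed


lemma char_prime_power_choose:
  assumes "CHAR('a::field) = p" "p > 1" "0 < k" "k < p ^ e"
  shows "of_nat (p ^ e choose k) = (0::'a)"
proof -
  have pr: "prime CHAR('a)" using assms(1,2) by (intro prime_CHAR_semidom) simp
  have cp: "CHAR('a poly) = p" using assms(1) by simp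
  have x: "([:1, 1:] :: 'a poly) = 1 + monom 1 1"
    by (simp add: one_pCons monom_Suc)
  have "([:1, 1:] :: 'a poly) ^ (p ^ e) = 1 ^ (p ^ e) + monom 1 1 ^ (p ^ e)"
    unfolding x by (rule freshmans_dream') (use pr cp assms(1) in auto)
  then have "coeff (([:1, 1:] :: 'a poly) ^ (p ^ e)) k = coeff (1 + monom 1 (p ^ e)) k"
    by (simp add: monom_power)
  also have "\<dots> = 0" using assms(3,4) by simp
  finally show ?thesis
    using assms(4) by (simp add: coeff_linear_poly_power)
qed

lemma pascal_if:
  assumes "1 \<le> a + b"
  shows "(a + b choose a) = (if 1 \<le> a then (a - 1 + b choose (a - 1)) else 0) + (if 1 \<le> b then (a + (b - 1) choose a) else 0)"
proof (cases a)
  case 0 then show ?thesis using assms by simp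
next
  case (Suc a')
  show ?thesis
  proof (cases b)
    case 0 then show ?thesis using Suc by simp
  next
    case (Suc b')
    have "Suc a' + Suc b' = Suc (a' + Suc b')" by simp
    then show ?thesis using \<open>a = Suc a'\<close> Suc by (simp only: binomial_Suc_Suc) simp
  qed
qed


lemma amul_basis_val:
  "amul_basis p m n t (\<alpha>, u) (\<beta>, v) (\<gamma>, w) =
    (if ((\<lambda>j. \<alpha> j + \<beta> j), u \<union> v) \<in> Aidx p m n t \<and> u \<inter> v = {} \<and> \<gamma> = (\<lambda>j. \<alpha> j + \<beta> j) \<and> w = u \<union> v
     then (\<Prod>j\<in>{1..m}. of_nat (\<alpha> j + \<beta> j choose \<alpha> j)) * osign u v else (0::'a::field))"
  by (auto simp: amul_basis_def amono_def)

lemma prod_split_i: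
  assumes "i \<in> {1..(m::nat)}"
  shows "(\<Prod>j\<in>{1..m}. f j) = f i * (\<Prod>j\<in>{1..m}-{i}. (f j :: 'a::comm_monoid_mult))"
  by (rule prod.remove) (use assms in simp_all)

lemma amul_basis_shift:
  fixes \<alpha> \<beta> :: "nat \<Rightarrow> nat"
  assumes A: "(\<alpha>, u) \<in> Aidx p m n t" and B: "(\<beta>, v) \<in> Aidx p m n t" and i: "i \<in> {1..m}"
    and ch: "CHAR('a::field) = p" and p1: "p > 1"
  shows "(if (\<gamma>(i := \<gamma> i + 1), w) \<in> Aidx p m n t then amul_basis p m n t (\<alpha>, u) (\<beta>, v) (\<gamma>(i := \<gamma> i + 1), w) else 0)
      = (if 1 \<le> \<alpha> i then amul_basis p m n t (\<alpha>(i := \<alpha> i - 1), u) (\<beta>, v) (\<gamma>, w) else 0)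
      + (if 1 \<le> \<beta> i then amul_basis p m n t (\<alpha>, u) (\<beta>(i := \<beta> i - 1), v) (\<gamma>, w) else (0::'a))"
proof -
  define \<sigma> where "\<sigma> = (\<lambda>j. \<alpha> j + \<beta> j)"
  have e1: "(\<lambda>j. (\<alpha>(i := \<alpha> i - 1)) j + \<beta> j) = \<sigma>(i := \<sigma> i - 1)" if "1 \<le> \<alpha> i"
    using that by (auto simp: \<sigma>_def fun_eq_iff)
  have e2: "(\<lambda>j. \<alpha> j + (\<beta>(i := \<beta> i - 1)) j) = \<sigma>(i := \<sigma> i - 1)" if "1 \<le> \<beta> i"
    using that by (auto simp: \<sigma>_def fun_eq_iff)
  have eup: "\<gamma>(i := \<gamma> i + 1) = \<sigma> \<longleftrightarrow> (1 \<le> \<sigma> i \<and> \<gamma> = \<sigma>(i := \<sigma> i - 1))"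
    by (auto simp: fun_eq_iff)
  show ?thesis
  proof (cases "u \<inter> v = {} \<and> w = u \<union> v \<and> 1 \<le> \<sigma> i \<and> \<gamma> = \<sigma>(i := \<sigma> i - 1)")
    case False
    then have F: "u \<inter> v \<noteq> {} \<or> w \<noteq> u \<union> v \<or> \<gamma>(i := \<gamma> i + 1) \<noteq> \<sigma>" using eup by blast
    have L: "amul_basis p m n t (\<alpha>, u) (\<beta>, v) (\<gamma>(i := \<gamma> i + 1), w) = (0::'a)"
      using F unfolding amul_basis_val \<sigma>_def by (elim disjE) simp_all
    have R1: "amul_basis p m n t (\<alpha>(i := \<alpha> i - 1), u) (\<beta>, v) (\<gamma>, w) = (0::'a)" if "1 \<le> \<alpha> i"
    proof -
      have "\<not> (u \<inter> v = {} \<and> \<gamma> = \<sigma>(i := \<sigma> i - 1) \<and> w = u \<union> v)" using F eup that by (auto simp: \<sigma>_def)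
      then show ?thesis unfolding amul_basis_val e1[OF that] by auto
    qed
    have R2: "amul_basis p m n t (\<alpha>, u) (\<beta>(i := \<beta> i - 1), v) (\<gamma>, w) = (0::'a)" if "1 \<le> \<beta> i"
    proof -
      have "\<not> (u \<inter> v = {} \<and> \<gamma> = \<sigma>(i := \<sigma> i - 1) \<and> w = u \<union> v)" using F eup that by (auto simp: \<sigma>_def)
      then show ?thesis unfolding amul_basis_val e2[OF that] by auto
    qed
    show ?thesis using L R1 R2 by simp
  next
    case True
    then have disj: "u \<inter> v = {}" and ww: "w = u \<union> v" and s1: "1 \<le> \<sigma> i" and gg: "\<gamma> = \<sigma>(i := \<sigma> i - 1)" by auto
    have gup: "\<gamma>(i := \<gamma> i + 1) = \<sigma>" using eup s1 gg by simp
    define P0 where "P0 = (\<Prod>j\<in>{1..m}-{i}. of_nat (\<sigma> j choose \<alpha> j) :: 'a)"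
    have K0: "(\<Prod>j\<in>{1..m}. of_nat (\<alpha> j + \<beta> j choose \<alpha> j)) = of_nat (\<sigma> i choose \<alpha> i) * P0"
      unfolding P0_def \<sigma>_def using prod_split_i[OF i] by blast
    have K1: "(\<Prod>j\<in>{1..m}. of_nat ((\<alpha>(i := \<alpha> i - 1)) j + \<beta> j choose (\<alpha>(i := \<alpha> i - 1)) j)) = of_nat (\<alpha> i - 1 + \<beta> i choose (\<alpha> i - 1)) * P0"
      unfolding P0_def \<sigma>_def by (subst prod_split_i[OF i]) (auto intro!: prod.cong)
    have K2: "(\<Prod>j\<in>{1..m}. of_nat (\<alpha> j + (\<beta>(i := \<beta> i - 1)) j choose \<alpha> j)) = of_nat (\<alpha> i + (\<beta> i - 1) choose \<alpha> i) * P0"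
      unfolding P0_def \<sigma>_def by (subst prod_split_i[OF i]) (auto intro!: prod.cong)
    have pas: "of_nat (\<sigma> i choose \<alpha> i) = (if 1 \<le> \<alpha> i then of_nat (\<alpha> i - 1 + \<beta> i choose (\<alpha> i - 1)) else 0)
        + (if 1 \<le> \<beta> i then of_nat (\<alpha> i + (\<beta> i - 1) choose \<alpha> i) else (0::'a))"
      using pascal_if[of "\<alpha> i" "\<beta> i"] s1 unfolding \<sigma>_def by (simp add: of_nat_add[symmetric] del: of_nat_add)
    have RHS: "(if 1 \<le> \<alpha> i then amul_basis p m n t (\<alpha>(i := \<alpha> i - 1), u) (\<beta>, v) (\<gamma>, w) else 0)
      + (if 1 \<le> \<beta> i then amul_basis p m n t (\<alpha>, u) (\<beta>(i := \<beta> i - 1), v) (\<gamma>, w) else (0::'a))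
      = (if (\<sigma>(i := \<sigma> i - 1), u \<union> v) \<in> Aidx p m n t then of_nat (\<sigma> i choose \<alpha> i) * P0 * osign u v else 0)"
    proof -
      have X1: "(if 1 \<le> \<alpha> i then amul_basis p m n t (\<alpha>(i := \<alpha> i - 1), u) (\<beta>, v) (\<gamma>, w) else 0) = (if (\<sigma>(i := \<sigma> i - 1), u \<union> v) \<in> Aidx p m n t then (if 1 \<le> \<alpha> i then of_nat (\<alpha> i - 1 + \<beta> i choose (\<alpha> i - 1)) else 0) * P0 * osign u v else (0::'a))"
      proof (cases "1 \<le> \<alpha> i")
        case True
        show ?thesis unfolding if_P[OF True] amul_basis_val e1[OF True] K1 using disj ww gg by simp
      qed simp
      have X2: "(if 1 \<le> \<beta> i then amul_basis p m n t (\<alpha>, u) (\<beta>(i := \<beta> i - 1), v) (\<gamma>, w) else 0) = (if (\<sigma>(i := \<sigma> i - 1), u \<union> v) \<in> Aidx p m n t then (if 1 \<le> \<beta> i then of_nat (\<alpha> i + (\<beta> i - 1) choose \<alpha> i) else 0) * P0 * osign u v else (0::'a))"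
      proof (cases "1 \<le> \<beta> i")
        case True
        show ?thesis unfolding if_P[OF True] amul_basis_val e2[OF True] K2 using disj ww gg by simp
      qed simp
      show ?thesis unfolding X1 X2 pas by (simp add: algebra_simps)
    qed
    show ?thesis
    proof (cases "(\<sigma>, u \<union> v) \<in> Aidx p m n t")
      case True
      have "(\<sigma>(i := \<sigma> i - 1), u \<union> v) \<in> Aidx p m n t" using Aidx_dec[OF True] .
      then show ?thesis unfolding RHS using True gup disj ww K0 by (simp add: amul_basis_val \<sigma>_def[symmetric])
    next
      case False
      have L: "(if (\<gamma>(i := \<gamma> i + 1), w) \<in> Aidx p m n t then amul_basis p m n t (\<alpha>, u) (\<beta>, v) (\<gamma>(i := \<gamma> i + 1), w) else 0) = (0::'a)"
        using False gup ww by simp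
      show ?thesis
      proof (cases "(\<sigma>(i := \<sigma> i - 1), u \<union> v) \<in> Aidx p m n t")
        case False then show ?thesis unfolding RHS L by simp
      next
        case True
        have "\<sigma> i = p ^ t i"
        proof -
          have a1: "\<sigma> i - 1 \<le> p ^ t i - 1" using True i by (auto simp: Aidx_iff split: if_splits dest!: spec[of _ i])
          have "\<not> (\<sigma> i \<le> p ^ t i - 1)"
          proof
            assume "\<sigma> i \<le> p ^ t i - 1"
            have T: "\<forall>j. (j \<in> {1..m} \<longrightarrow> (\<sigma>(i := \<sigma> i - 1)) j \<le> p ^ t j - 1) \<and> (j \<notin> {1..m} \<longrightarrow> (\<sigma>(i := \<sigma> i - 1)) j = 0)"
              "u \<union> v \<subseteq> {m+1..m+n}" using True unfolding Aidx_iff by blast+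
            have "\<forall>j. (j \<in> {1..m} \<longrightarrow> \<sigma> j \<le> p ^ t j - 1) \<and> (j \<notin> {1..m} \<longrightarrow> \<sigma> j = 0)"
            proof
              fix j show "(j \<in> {1..m} \<longrightarrow> \<sigma> j \<le> p ^ t j - 1) \<and> (j \<notin> {1..m} \<longrightarrow> \<sigma> j = 0)"
                using T(1) \<open>\<sigma> i \<le> p ^ t i - 1\<close> i by (cases "j = i") (auto dest: spec[of _ j])
            qed
            then have "(\<sigma>, u \<union> v) \<in> Aidx p m n t" using T(2) unfolding Aidx_iff by blast
            then show False using False by simp
          qed
          moreover have "p ^ t i \<ge> 1" using p1 by simp
          ultimately show ?thesis using a1 by linarith
        qed
        moreover have "\<beta> i \<le> p ^ t i - 1" "\<alpha> i \<le> p ^ t i - 1" using A B i by (auto simp: Aidx_iff)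
        moreover have "p ^ t i \<ge> 1" using p1 by simp
        ultimately have "0 < \<alpha> i" "\<alpha> i < p ^ t i"
          unfolding \<sigma>_def by linarith+
        then have "of_nat (\<sigma> i choose \<alpha> i) = (0::'a)"
          using \<open>\<sigma> i = p ^ t i\<close> char_prime_power_choose[OF ch p1] by simp
        then show ?thesis unfolding RHS L by simp
      qed
    qed
  qed
qed


lemma Dbasis_odd:
  assumes "r \<in> {m+1..m+n}"
  shows "Dbasis m n r (\<beta>, v) = (if r \<in> v then (\<lambda>c. (-1) ^ card {l \<in> v. l < r} * amono (\<beta>, v - {r}) c) else (\<lambda>c. 0))"
  using assms by (simp add: Dbasis_def)

lemma Aidx_remove: "(\<beta>, v) \<in> Aidx p m n t \<Longrightarrow> (\<beta>, v - {r}) \<in> Aidx p m n t"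
  by (auto simp: Aidx_iff)

definition Phi :: "nat \<Rightarrow> nat \<Rightarrow> nat \<Rightarrow> (nat \<Rightarrow> nat) \<Rightarrow> nat \<Rightarrow> aidx \<Rightarrow> aidx \<Rightarrow> aidx \<Rightarrow> 'a::field" where
  "Phi p m n t r a b = amul p m n t (amono a) (Dbasis m n r b)"

lemma Phi_shift:
  fixes \<alpha> \<beta> :: "nat \<Rightarrow> nat"
  assumes A: "(\<alpha>, u) \<in> Aidx p m n t" and B: "(\<beta>, v) \<in> Aidx p m n t" and i: "i \<in> {1..m}"
    and r: "r \<in> {1..m+n}"
    and ch: "CHAR('a::field) = p" and p1: "p > 1"
  shows "(if (\<gamma>(i := \<gamma> i + 1), w) \<in> Aidx p m n t then Phi p m n t r (\<alpha>, u) (\<beta>, v) (\<gamma>(i := \<gamma> i + 1), w) else 0)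
      = (if 1 \<le> \<alpha> i then Phi p m n t r (\<alpha>(i := \<alpha> i - 1), u) (\<beta>, v) (\<gamma>, w) else 0)
      + (if 1 \<le> \<beta> i then Phi p m n t r (\<alpha>, u) (\<beta>(i := \<beta> i - 1), v) (\<gamma>, w) else (0::'a))"
proof -
  have A': "(\<alpha>(i := \<alpha> i - 1), u) \<in> Aidx p m n t" using Aidx_dec[OF A] .
  have B': "(\<beta>(i := \<beta> i - 1), v) \<in> Aidx p m n t" using Aidx_dec[OF B] .
  show ?thesis
  proof (cases "r \<in> {1..m}")
    case True
    note D = Dbasis_even[OF True]
    show ?thesis
    proof (cases "1 \<le> \<beta> r")
      case br: True
      define c where "c = \<beta>(r := \<beta> r - 1)"
      have C: "(c, v) \<in> Aidx p m n t" unfolding c_def using Aidx_dec[OF B] .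
      note M = amul_basis_shift[OF A C i ch p1, of \<gamma> w]
      have P1: "Phi p m n t r (\<alpha>, u) (\<beta>, v) = (amul_basis p m n t (\<alpha>, u) (c, v) :: aidx \<Rightarrow> 'a)"
        unfolding Phi_def D using br amul_amono_amono[OF A C] by (simp add: c_def)
      have P2: "Phi p m n t r (\<alpha>(i := \<alpha> i - 1), u) (\<beta>, v) = (amul_basis p m n t (\<alpha>(i := \<alpha> i - 1), u) (c, v) :: aidx \<Rightarrow> 'a)"
        unfolding Phi_def D using br amul_amono_amono[OF A' C] by (simp add: c_def)
      have P3: "(if 1 \<le> \<beta> i then Phi p m n t r (\<alpha>, u) (\<beta>(i := \<beta> i - 1), v) (\<gamma>, w) else 0)
          = (if 1 \<le> c i then amul_basis p m n t (\<alpha>, u) (c(i := c i - 1), v) (\<gamma>, w) else (0::'a))"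
      proof (cases "r = i")
        case True
        have cc: "c(i := c i - 1) = (\<beta>(i := \<beta> i - 1))(r := (\<beta>(i := \<beta> i - 1)) r - 1)"
          using True by (simp add: c_def)
        have C2: "((\<beta>(i := \<beta> i - 1))(r := (\<beta>(i := \<beta> i - 1)) r - 1), v) \<in> Aidx p m n t" using Aidx_dec[OF B'] .
        show ?thesis
          using Aidx_dec[OF B, of i "Suc (Suc 0)"] unfolding Phi_def D cc using True br by (simp add: c_def amul_amono_amono[OF A] amul_zero2)
      next
        case False
        have cc: "c(i := c i - 1) = (\<beta>(i := \<beta> i - 1))(r := (\<beta>(i := \<beta> i - 1)) r - 1)"
          using False by (auto simp: c_def fun_eq_iff)
        have C2: "((\<beta>(i := \<beta> i - 1))(r := (\<beta>(i := \<beta> i - 1)) r - 1), v) \<in> Aidx p m n t" using Aidx_dec[OF B'] .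
        have ci: "c i = \<beta> i" using False by (simp add: c_def)
        have E: "Dbasis m n r (\<beta>(i := \<beta> i - 1), v) = amono (c(i := c i - 1), v)"
          unfolding D cc using False br by simp
        have E2: "Phi p m n t r (\<alpha>, u) (\<beta>(i := \<beta> i - 1), v) = (amul_basis p m n t (\<alpha>, u) (c(i := c i - 1), v) :: aidx \<Rightarrow> 'a)"
          unfolding Phi_def E using amul_amono_amono[OF A Aidx_dec[OF C]] .
        show ?thesis unfolding E2 ci ..

      qed
      show ?thesis unfolding P1 P2 P3 using M by simp
    next
      case br: False
      have P1: "Phi p m n t r a (\<beta>, v) = (\<lambda>c. 0::'a)" for a
        unfolding Phi_def D using br by (simp add: amul_zero2)
      have P3: "(if 1 \<le> \<beta> i then Phi p m n t r (\<alpha>, u) (\<beta>(i := \<beta> i - 1), v) (\<gamma>, w) else (0::'a)) = 0"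
        unfolding Phi_def D using br by (cases "r = i") (auto simp: amul_zero2)
      show ?thesis unfolding P1 P3 by simp
    qed
  next
    case False
    then have r1: "r \<in> {m+1..m+n}" using r by auto
    note D = Dbasis_odd[OF r1]
    show ?thesis
    proof (cases "r \<in> v")
      case rv: True
      define sg where "sg = ((-1) ^ card {l \<in> v. l < r} :: 'a)"
      have C: "(\<beta>, v - {r}) \<in> Aidx p m n t" using Aidx_remove[OF B] .
      have C2: "(\<beta>(i := \<beta> i - 1), v - {r}) \<in> Aidx p m n t" using Aidx_remove[OF B'] .
      note M = amul_basis_shift[OF A C i ch p1, of \<gamma> w]
      have P1: "Phi p m n t r a (\<beta>, v) = (\<lambda>c. sg * amul_basis p m n t a (\<beta>, v - {r}) c)" if "a \<in> Aidx p m n t" for a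
        unfolding Phi_def D sg_def using rv amul_amono_smul[OF that C] by simp
      have P3: "Phi p m n t r (\<alpha>, u) (\<beta>(i := \<beta> i - 1), v) = (\<lambda>c. sg * amul_basis p m n t (\<alpha>, u) (\<beta>(i := \<beta> i - 1), v - {r}) c)"
        unfolding Phi_def D sg_def using rv amul_amono_smul[OF A C2] by simp
      have e: "\<And>P x. (if P then sg * x else 0) = sg * (if P then x else (0::'a))" by simp
      show ?thesis unfolding P1[OF A] P1[OF A'] P3
        by (simp only: e M distrib_left[symmetric])
    next
      case rv: False
      have P1: "Phi p m n t r a (\<beta>', v) = (\<lambda>c. 0::'a)" for a \<beta>'
        unfolding Phi_def D using rv by (simp add: amul_zero2)
      show ?thesis unfolding P1 by simp
    qed
  qed
qed


lemma wbr_basis_Phi: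
  "wbr_basis p m n t (\<alpha>, u, r) (\<beta>, v, s) (\<gamma>, w, s') =
    (if s' = s then Phi p m n t r (\<alpha>, u) (\<beta>, v) (\<gamma>, w) else 0)
    - (-1) ^ ((card u + tau m r) * (card v + tau m s)) * (if s' = r then Phi p m n t s (\<beta>, v) (\<alpha>, u) (\<gamma>, w) else (0::'a::field))"
  by (simp add: wbr_basis_def Phi_def)

lemma wbr_basis_shift:
  fixes \<alpha> \<beta> :: "nat \<Rightarrow> nat"
  assumes A: "(\<alpha>, u, r) \<in> Widx p m n t" and B: "(\<beta>, v, s) \<in> Widx p m n t" and i: "i \<in> {1..m}"
    and ch: "CHAR('a::field) = p" and p1: "p > 1"
  shows "(if (\<gamma>(i := \<gamma> i + 1), w, s') \<in> Widx p m n t then wbr_basis p m n t (\<alpha>, u, r) (\<beta>, v, s) (\<gamma>(i := \<gamma> i + 1), w, s') else 0)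
      = (if 1 \<le> \<alpha> i then wbr_basis p m n t (\<alpha>(i := \<alpha> i - 1), u, r) (\<beta>, v, s) (\<gamma>, w, s') else 0)
      + (if 1 \<le> \<beta> i then wbr_basis p m n t (\<alpha>, u, r) (\<beta>(i := \<beta> i - 1), v, s) (\<gamma>, w, s') else (0::'a))"
proof -
  have A1: "(\<alpha>, u) \<in> Aidx p m n t" "r \<in> {1..m+n}" using A by (auto simp: Widx_iff)
  have B1: "(\<beta>, v) \<in> Aidx p m n t" "s \<in> {1..m+n}" using B by (auto simp: Widx_iff)
  define sg where "sg = ((-1) ^ ((card u + tau m r) * (card v + tau m s)) :: 'a)"
  note S1 = Phi_shift[OF A1(1) B1(1) i A1(2) ch p1, of \<gamma> w]
  note S2 = Phi_shift[OF B1(1) A1(1) i B1(2) ch p1, of \<gamma> w]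
  show ?thesis
  proof (cases "s' \<in> {1..m+n}")
    case True
    have L: "(if (\<gamma>(i := \<gamma> i + 1), w, s') \<in> Widx p m n t then wbr_basis p m n t (\<alpha>, u, r) (\<beta>, v, s) (\<gamma>(i := \<gamma> i + 1), w, s') else 0)
      = (if s' = s then (if (\<gamma>(i := \<gamma> i + 1), w) \<in> Aidx p m n t then Phi p m n t r (\<alpha>, u) (\<beta>, v) (\<gamma>(i := \<gamma> i + 1), w) else 0) else 0)
        - sg * (if s' = r then (if (\<gamma>(i := \<gamma> i + 1), w) \<in> Aidx p m n t then Phi p m n t s (\<beta>, v) (\<alpha>, u) (\<gamma>(i := \<gamma> i + 1), w) else 0) else (0::'a))"
      using True by (simp add: Widx_iff wbr_basis_Phi sg_def)
    show ?thesis unfolding L S1 S2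
      by (simp add: wbr_basis_Phi sg_def algebra_simps)
  next
    case False
    then have "s' \<noteq> s" "s' \<noteq> r" using A1 B1 by auto
    then show ?thesis using False by (simp add: Widx_iff wbr_basis_Phi)
  qed
qed

definition upW :: "nat \<Rightarrow> widx \<Rightarrow> widx" where
  "upW i b = (case b of (\<beta>, v, s) \<Rightarrow> (\<beta>(i := \<beta> i + 1), v, s))"
definition dnW :: "nat \<Rightarrow> widx \<Rightarrow> widx" where
  "dnW i b = (case b of (\<beta>, v, s) \<Rightarrow> (\<beta>(i := \<beta> i - 1), v, s))"

lemma shiftW_val: "shiftW p m n t i 1 X b = (if upW i b \<in> Widx p m n t then X (upW i b) else 0)"
  by (cases b) (simp add: shiftW_def upW_def)

lemma sum_shiftW:
  "(\<Sum>b\<in>Widx p m n t. shiftW p m n t i 1 X b * G b) =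
   (\<Sum>b\<in>Widx p m n t. if 1 \<le> fst b i then X b * G (dnW i b) else (0::'a::field))"
proof -
  have "(\<Sum>b\<in>Widx p m n t. shiftW p m n t i 1 X b * G b) = (\<Sum>b\<in>{b\<in>Widx p m n t. upW i b \<in> Widx p m n t}. X (upW i b) * G b)"
  proof -
    have "(\<Sum>b\<in>Widx p m n t. shiftW p m n t i 1 X b * G b) = (\<Sum>b\<in>Widx p m n t. if upW i b \<in> Widx p m n t then X (upW i b) * G b else 0)"
      by (intro sum.cong refl) (simp only: shiftW_val, simp)
    then show ?thesis by (simp add: sum.inter_filter[OF finite_Widx])
  qed
  also have "\<dots> = (\<Sum>b\<in>{b\<in>Widx p m n t. 1 \<le> fst b i}. X b * G (dnW i b))"
  proof (rule sum.reindex_bij_witness[of _ "dnW i" "upW i"])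
    fix b assume "b \<in> {b \<in> Widx p m n t. upW i b \<in> Widx p m n t}"
    then show "dnW i (upW i b) = b" "upW i b \<in> {b \<in> Widx p m n t. 1 \<le> fst b i}"
      by (cases b; simp add: upW_def dnW_def)+
  next
    fix b assume b: "b \<in> {b \<in> Widx p m n t. 1 \<le> fst b i}"
    then show "upW i (dnW i b) = b" by (cases b) (auto simp: upW_def dnW_def fun_eq_iff)
    have "upW i (dnW i b) = b" using b by (cases b) (auto simp: upW_def dnW_def fun_eq_iff)
    moreover have "dnW i b \<in> Widx p m n t" using b by (cases b) (auto simp: dnW_def Widx_iff intro: Aidx_dec)
    ultimately show "dnW i b \<in> {b \<in> Widx p m n t. upW i b \<in> Widx p m n t}" using b by simp
  next
    fix b assume b: "b \<in> {b \<in> Widx p m n t. upW i b \<in> Widx p m n t}"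
    then show "X (upW i b) * G (dnW i (upW i b)) = X (upW i b) * G b"
      by (cases b) (simp add: upW_def dnW_def)
  qed
  also have "\<dots> = (\<Sum>b\<in>Widx p m n t. if 1 \<le> fst b i then X b * G (dnW i b) else 0)"
    by (simp add: sum.inter_filter[OF finite_Widx])
  finally show ?thesis .
qed


lemma wbr_basis_shift':
  assumes "b1 \<in> Widx p m n t" "b2 \<in> Widx p m n t" "i \<in> {1..m}" "CHAR('a::field) = p" "p > 1"
  shows "(if upW i c \<in> Widx p m n t then wbr_basis p m n t b1 b2 (upW i c) else 0)
     = (if 1 \<le> fst b1 i then wbr_basis p m n t (dnW i b1) b2 c else 0)
     + (if 1 \<le> fst b2 i then wbr_basis p m n t b1 (dnW i b2) c else (0::'a))"
proof -
  obtain \<alpha> u r where b1: "b1 = (\<alpha>, u, r)" by (cases b1) auto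
  obtain \<beta> v s where b2: "b2 = (\<beta>, v, s)" by (cases b2) auto
  obtain \<gamma> w s' where c: "c = (\<gamma>, w, s')" by (cases c) auto
  have e: "upW i c = (\<gamma>(i := \<gamma> i + 1), w, s')" "dnW i b1 = (\<alpha>(i := \<alpha> i - 1), u, r)" "dnW i b2 = (\<beta>(i := \<beta> i - 1), v, s)"
    by (simp_all add: upW_def dnW_def c b1 b2)
  show ?thesis unfolding e unfolding b1 b2 c fst_conv
    by (rule wbr_basis_shift) (use assms b1 b2 in auto)
qed

lemma shiftW_der:
  assumes i: "i \<in> {1..m}" and ch: "CHAR('a::field) = p" and p1: "p > 1"
  shows "shiftW p m n t i 1 (wbr p m n t X Y) = (\<lambda>c. wbr p m n t (shiftW p m n t i 1 X) Y c + wbr p m n t X (shiftW p m n t i 1 (Y :: widx \<Rightarrow> 'a)) c)"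
proof
  fix c
  let ?W = "Widx p m n t"
  have "shiftW p m n t i 1 (wbr p m n t X Y) c = (\<Sum>b1\<in>?W. \<Sum>b2\<in>?W. X b1 * Y b2 * (if upW i c \<in> ?W then wbr_basis p m n t b1 b2 (upW i c) else 0))"
    by (simp only: shiftW_val) (simp add: wbr_def)
  also have "\<dots> = (\<Sum>b1\<in>?W. \<Sum>b2\<in>?W. X b1 * Y b2 * ((if 1 \<le> fst b1 i then wbr_basis p m n t (dnW i b1) b2 c else 0)
     + (if 1 \<le> fst b2 i then wbr_basis p m n t b1 (dnW i b2) c else 0)))"
    by (intro sum.cong refl) (simp add: wbr_basis_shift'[OF _ _ i ch p1])
  also have "\<dots> = (\<Sum>b1\<in>?W. \<Sum>b2\<in>?W. if 1 \<le> fst b1 i then X b1 * (Y b2 * wbr_basis p m n t (dnW i b1) b2 c) else 0)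
      + (\<Sum>b1\<in>?W. X b1 * (\<Sum>b2\<in>?W. if 1 \<le> fst b2 i then Y b2 * wbr_basis p m n t b1 (dnW i b2) c else 0))"
  proof -
    have pw: "\<And>x y A B a b. x * y * ((if A then a else 0) + (if B then b else 0)) = (if A then x * (y * a) else 0) + x * (if B then y * b else (0::'a))"
      by (simp add: algebra_simps)
    show ?thesis unfolding pw sum.distrib sum_distrib_left[symmetric] ..
  qed
  also have "(\<Sum>b1\<in>?W. \<Sum>b2\<in>?W. if 1 \<le> fst b1 i then X b1 * (Y b2 * wbr_basis p m n t (dnW i b1) b2 c) else 0)
      = wbr p m n t (shiftW p m n t i 1 X) Y c"
  proof -
    have "wbr p m n t (shiftW p m n t i 1 X) Y c = (\<Sum>b1\<in>?W. shiftW p m n t i 1 X b1 * (\<Sum>b2\<in>?W. Y b2 * wbr_basis p m n t b1 b2 c))"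
      by (simp add: wbr_def sum_distrib_left mult.assoc)
    also have "\<dots> = (\<Sum>b1\<in>?W. if 1 \<le> fst b1 i then X b1 * (\<Sum>b2\<in>?W. Y b2 * wbr_basis p m n t (dnW i b1) b2 c) else 0)"
      by (rule sum_shiftW)
    finally have E: "wbr p m n t (shiftW p m n t i 1 X) Y c = (\<Sum>b1\<in>?W. if 1 \<le> fst b1 i then X b1 * (\<Sum>b2\<in>?W. Y b2 * wbr_basis p m n t (dnW i b1) b2 c) else 0)" .
    show ?thesis unfolding E by (intro sum.cong refl) (simp add: sum_distrib_left)
  qed
  also have "(\<Sum>b1\<in>?W. X b1 * (\<Sum>b2\<in>?W. if 1 \<le> fst b2 i then Y b2 * wbr_basis p m n t b1 (dnW i b2) c else 0))
      = wbr p m n t X (shiftW p m n t i 1 Y) c"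
  proof -
    have "wbr p m n t X (shiftW p m n t i 1 Y) c = (\<Sum>b1\<in>?W. X b1 * (\<Sum>b2\<in>?W. shiftW p m n t i 1 Y b2 * wbr_basis p m n t b1 b2 c))"
      by (simp add: wbr_def sum_distrib_left mult.assoc)
    also have "\<dots> = (\<Sum>b1\<in>?W. X b1 * (\<Sum>b2\<in>?W. if 1 \<le> fst b2 i then Y b2 * wbr_basis p m n t b1 (dnW i b2) c else 0))"
      by (simp only: sum_shiftW)
    finally show ?thesis by simp
  qed
  finally show "shiftW p m n t i 1 (wbr p m n t X Y) c = wbr p m n t (shiftW p m n t i 1 X) Y c + wbr p m n t X (shiftW p m n t i 1 Y) c" .
qed


lemma pascal_sum:
  fixes f :: "nat \<Rightarrow> 'a::comm_ring_1"
  shows "(\<Sum>k\<le>N. of_nat (N choose k) * (f (Suc k) + f k)) = (\<Sum>k\<le>Suc N. of_nat (Suc N choose k) * f k)"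
proof -
  have 1: "(\<Sum>k\<le>Suc N. of_nat (Suc N choose k) * f k) = f 0 + (\<Sum>k\<le>N. of_nat (Suc N choose Suc k) * f (Suc k))"
    by (subst sum.atMost_Suc_shift) simp
  have 2: "(\<Sum>k\<le>N. of_nat (Suc N choose Suc k) * f (Suc k)) = (\<Sum>k\<le>N. of_nat (N choose k) * f (Suc k)) + (\<Sum>k\<le>N. of_nat (N choose Suc k) * f (Suc k))"
    by (simp add: sum.distrib[symmetric] algebra_simps)
  have 3: "(\<Sum>k\<le>N. of_nat (N choose k) * f k) = f 0 + (\<Sum>k\<le>N. of_nat (N choose Suc k) * f (Suc k))"
  proof (cases N)
    case 0 then show ?thesis by simp
  next
    case (Suc N')
    have "(\<Sum>k\<le>N. of_nat (N choose k) * f k) = f 0 + (\<Sum>k\<le>N'. of_nat (N choose Suc k) * f (Suc k))"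
      unfolding Suc by (subst sum.atMost_Suc_shift) simp
    also have "(\<Sum>k\<le>N'. of_nat (N choose Suc k) * f (Suc k)) = (\<Sum>k\<le>N. of_nat (N choose Suc k) * f (Suc k))"
      unfolding Suc by (simp add: binomial_eq_0 del: binomial_Suc_Suc)
    finally show ?thesis .
  qed
  have "(\<Sum>k\<le>N. of_nat (N choose k) * (f (Suc k) + f k)) = (\<Sum>k\<le>N. of_nat (N choose k) * f (Suc k)) + (\<Sum>k\<le>N. of_nat (N choose k) * f k)"
    by (simp add: sum.distrib[symmetric] algebra_simps)
  then show ?thesis unfolding 1 2 3 by (simp add: algebra_simps)
qed

definition sh1 :: "nat \<Rightarrow> nat \<Rightarrow> nat \<Rightarrow> (nat \<Rightarrow> nat) \<Rightarrow> nat \<Rightarrow> (widx \<Rightarrow> 'a) \<Rightarrow> widx \<Rightarrow> 'a::field" where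
  "sh1 p m n t i X = shiftW p m n t i 1 X"

lemma sh1_sum:
  "sh1 p m n t i (\<lambda>c. \<Sum>k\<in>K. f k c) = (\<lambda>c. \<Sum>k\<in>K. sh1 p m n t i (f k) c)"
  unfolding sh1_def by (auto simp: shiftW_def fun_eq_iff)

lemma sh1_smul:
  "sh1 p m n t i (\<lambda>c. a * f c) = (\<lambda>c. a * sh1 p m n t i f c)"
  unfolding sh1_def by (auto simp: shiftW_def fun_eq_iff)

lemma sh1_der:
  assumes i: "i \<in> {1..m}" and ch: "CHAR('a::field) = p" and p1: "p > 1"
  shows "sh1 p m n t i (wbr p m n t X Y) = (\<lambda>c. wbr p m n t (sh1 p m n t i X) Y c + wbr p m n t X (sh1 p m n t i (Y :: widx \<Rightarrow> 'a)) c)"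
  unfolding sh1_def by (rule shiftW_der[OF i ch p1])

lemma shiftW_smul:
  "shiftW p m n t i N (\<lambda>c. a * f c) = (\<lambda>c. a * shiftW p m n t i N f (c::widx) :: 'a::field)"
  by (auto simp: shiftW_def fun_eq_iff)

lemma shiftW_add:
  "shiftW p m n t i N (\<lambda>c. f c + g c) = (\<lambda>c. shiftW p m n t i N f c + shiftW p m n t i N g (c::widx) :: 'a::field)"
  by (auto simp: shiftW_def fun_eq_iff)

lemma shiftW_pow_leibniz:
  assumes i: "i \<in> {1..m}" and ch: "CHAR('a::field) = p" and p1: "p > 1"
  shows "(sh1 p m n t i ^^ N) (wbr p m n t X Y) =
    (\<lambda>c. \<Sum>k\<le>N. of_nat (N choose k) * wbr p m n t ((sh1 p m n t i ^^ k) X) ((sh1 p m n t i ^^ (N - k)) (Y :: widx \<Rightarrow> 'a)) c)"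
proof (induction N)
  case 0
  show ?case by simp
next
  case (Suc N)
  let ?S = "sh1 p m n t i :: (widx \<Rightarrow> 'a) \<Rightarrow> _"
  have "(?S ^^ Suc N) (wbr p m n t X Y) = ?S ((?S ^^ N) (wbr p m n t X Y))" by simp
  also have "\<dots> = (\<lambda>c. \<Sum>k\<le>N. of_nat (N choose k) * ?S (wbr p m n t ((?S ^^ k) X) ((?S ^^ (N - k)) Y)) c)"
    unfolding Suc.IH sh1_sum sh1_smul ..
  also have "\<dots> = (\<lambda>c. \<Sum>k\<le>N. of_nat (N choose k) * (wbr p m n t ((?S ^^ Suc k) X) ((?S ^^ (Suc N - Suc k)) Y) c
      + wbr p m n t ((?S ^^ k) X) ((?S ^^ (Suc N - k)) Y) c))"
  proof (rule ext, rule sum.cong[OF refl])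
    fix c k assume "k \<in> {..N}"
    then have "Suc N - k = Suc (N - k)" by auto
    then show "of_nat (N choose k) * ?S (wbr p m n t ((?S ^^ k) X) ((?S ^^ (N - k)) Y)) c =
      of_nat (N choose k) * (wbr p m n t ((?S ^^ Suc k) X) ((?S ^^ (Suc N - Suc k)) Y) c
      + wbr p m n t ((?S ^^ k) X) ((?S ^^ (Suc N - k)) Y) c)"
      by (simp add: sh1_der[OF i ch p1])
  qed
  also have "\<dots> = (\<lambda>c. \<Sum>k\<le>Suc N. of_nat (Suc N choose k) * wbr p m n t ((?S ^^ k) X) ((?S ^^ (Suc N - k)) Y) c)"
    using pascal_sum[of N "\<lambda>k. wbr p m n t ((?S ^^ k) X) ((?S ^^ (Suc N - k)) Y) c" for c] by simp
  finally show ?case .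
qed

lemma shiftW_q_leibniz:
  assumes i: "i \<in> {1..m}" and ch: "CHAR('a::field) = p" and p1: "p > 1"
  shows "(sh1 p m n t i ^^ (p ^ r)) (wbr p m n t X Y) =
    (\<lambda>c. wbr p m n t ((sh1 p m n t i ^^ (p ^ r)) X) Y c + wbr p m n t X ((sh1 p m n t i ^^ (p ^ r)) (Y :: widx \<Rightarrow> 'a)) c)"
proof -
  let ?S = "sh1 p m n t i :: (widx \<Rightarrow> 'a) \<Rightarrow> _"
  let ?q = "p ^ r"
  have q0: "?q > 0" using p1 by simp
  have "(?S ^^ ?q) (wbr p m n t X Y) = (\<lambda>c. \<Sum>k\<le>?q. of_nat (?q choose k) * wbr p m n t ((?S ^^ k) X) ((?S ^^ (?q - k)) Y) c)"
    by (rule shiftW_pow_leibniz[OF i ch p1])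
  also have "\<dots> = (\<lambda>c. \<Sum>k\<in>{0, ?q}. of_nat (?q choose k) * wbr p m n t ((?S ^^ k) X) ((?S ^^ (?q - k)) Y) c)"
  proof (rule ext, rule sum.mono_neutral_right)
    fix c
    show "{0, ?q} \<subseteq> {..?q}" by auto
    show "\<forall>k\<in>{..?q} - {0, ?q}. of_nat (?q choose k) * wbr p m n t ((?S ^^ k) X) ((?S ^^ (?q - k)) Y) c = 0"
      using char_prime_power_choose[OF ch p1] by auto
  qed simp
  also have "\<dots> = (\<lambda>c. wbr p m n t ((?S ^^ ?q) X) Y c + wbr p m n t X ((?S ^^ ?q) Y) c)"
    using q0 by (simp add: add.commute)
  finally show ?thesis .
qed


lemma wbr_Dvec_fun:
  assumes "i \<in> {1..m}"
  shows "wbr p m n t (Dvec i) = (sh1 p m n t i :: (widx \<Rightarrow> 'a::field) \<Rightarrow> _)"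
  by (rule ext) (simp add: sh1_def wbr_Dvec[OF assms])

lemma T_shift:
  assumes "i \<in> {1..m}" "N > 0"
  shows "(wbr p m n t (Dvec i) ^^ N) X = shiftW p m n t i N (X :: widx \<Rightarrow> 'a::field)"
proof -
  obtain N' where "N = Suc N'" using assms(2) gr0_implies_Suc by blast
  then show ?thesis by (simp only: shiftW_iter[OF assms(1)])
qed

lemma T_leibniz:
  assumes i: "i \<in> {1..m}" and ch: "CHAR('a::field) = p" and p1: "p > 1"
  shows "(wbr p m n t (Dvec i) ^^ (p ^ r)) (wbr p m n t X Y) =
    (\<lambda>c. wbr p m n t ((wbr p m n t (Dvec i) ^^ (p ^ r)) X) Y c + wbr p m n t X ((wbr p m n t (Dvec i) ^^ (p ^ r)) (Y :: widx \<Rightarrow> 'a)) c)"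
  unfolding wbr_Dvec_fun[OF i] by (rule shiftW_q_leibniz[OF i ch p1])

lemma Widx_up_down:
  assumes "(\<gamma>(i := \<gamma> i + N), w, s) \<in> Widx p m n t"
  shows "(\<gamma>, w, s) \<in> Widx p m n t"
  using Aidx_shift_down[of \<gamma> i N w p m n t 0] assms by (simp add: Widx_iff)

lemma shiftW_Weven:
  assumes "X \<in> Weven p m n t"
  shows "shiftW p m n t i N X \<in> Weven p m n t"
  using assms unfolding Weven_def
  by (auto simp: shiftW_def split: if_splits dest: Widx_up_down)

lemma wdeg_up:
  assumes "i \<in> {1..m}"
  shows "wdeg m (\<gamma>(i := \<gamma> i + N), w, s) = wdeg m (\<gamma>, w, s) + int N"
proof -
  have "(\<Sum>j\<in>{1..m}. (\<gamma>(i := \<gamma> i + N)) j) = (\<Sum>j\<in>{1..m}. \<gamma> j) + N"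
    using assms by (simp add: sum.remove sum.distrib)
  then have "int (\<Sum>j\<in>{1..m}. (\<gamma>(i := \<gamma> i + N)) j) = int (\<Sum>j\<in>{1..m}. \<gamma> j) + int N" by (simp only: of_nat_add)
  then show ?thesis by (simp only: wdeg_def prod.case)
qed

lemma shiftW_Wcomp:
  assumes "X \<in> Wcomp p m n t j" "i \<in> {1..m}"
  shows "shiftW p m n t i N X \<in> Wcomp p m n t (j - int N)"
proof -
  have "X \<in> Weven p m n t" using assms(1) by (simp add: Wcomp_def)
  then have "shiftW p m n t i N X \<in> Weven p m n t" by (rule shiftW_Weven)
  moreover have "wdeg m b = j - int N" if "shiftW p m n t i N X b \<noteq> 0" for b
  proof -
    obtain \<gamma> w s where b: "b = (\<gamma>, w, s)" by (cases b) auto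
    have "X (\<gamma>(i := \<gamma> i + N), w, s) \<noteq> 0" using that by (auto simp: shiftW_def b split: if_splits)
    then have "wdeg m (\<gamma>(i := \<gamma> i + N), w, s) = j" using assms(1) by (auto simp: Wcomp_def)
    then show ?thesis using wdeg_up[OF assms(2)] b by simp
  qed
  ultimately show ?thesis by (simp add: Wcomp_def)
qed

lemma wbr_linear_left:
  "wbr p m n t (\<lambda>b. a * X b + Z b) Y = (\<lambda>c. a * wbr p m n t X Y c + wbr p m n t Z Y c)"
  by (auto simp: wbr_def fun_eq_iff sum.distrib sum_distrib_left algebra_simps)

lemma wbr_linear_right:
  "wbr p m n t X (\<lambda>b. a * Y b + Z b) = (\<lambda>c. a * wbr p m n t X Y c + wbr p m n t X Z c)"
  by (auto simp: wbr_def fun_eq_iff sum.distrib sum_distrib_left algebra_simps)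

lemma wbr_sum_left:
  "wbr p m n t (\<lambda>b. \<Sum>i\<in>I. F i b) Y = (\<lambda>c. \<Sum>i\<in>I. wbr p m n t (F i) Y c)"
  by (auto simp: wbr_def fun_eq_iff sum_distrib_right intro: sum.swap[THEN trans])
    (subst sum.swap, rule sum.cong, simp, subst sum.swap, simp)


lemma finite_Aidx_set: "(\<alpha>, u) \<in> Aidx p m n t \<Longrightarrow> finite u"
  by (auto simp: Aidx_iff intro: finite_subset)

lemma Phi_support:
  assumes A: "(\<alpha>, u) \<in> Aidx p m n t" and B: "(\<beta>, v) \<in> Aidx p m n t" and r: "r \<in> {1..m+n}"
    and nz: "Phi p m n t r (\<alpha>, u) (\<beta>, v) (\<gamma>, w) \<noteq> (0::'a::field)"
  shows "(\<gamma>, w) \<in> Aidx p m n t \<and> card w + tau m r = card u + card v"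
proof (cases "r \<in> {1..m}")
  case True
  note D = Dbasis_even[OF True]
  show ?thesis
  proof (cases "1 \<le> \<beta> r")
    case br: True
    have C: "(\<beta>(r := \<beta> r - 1), v) \<in> Aidx p m n t" using Aidx_dec[OF B] .
    have "amul_basis p m n t (\<alpha>, u) (\<beta>(r := \<beta> r - 1), v) (\<gamma>, w) \<noteq> (0::'a)"
      using nz unfolding Phi_def D if_P[OF br] amul_amono_amono[OF A C] .
    then have "(\<gamma>, w) \<in> Aidx p m n t" "u \<inter> v = {}" "w = u \<union> v"
      unfolding amul_basis_val by (auto split: if_splits)
    moreover have "tau m r = 0" using True by (simp add: tau_def)
    ultimately show ?thesis using finite_Aidx_set[OF A] finite_Aidx_set[OF B] by (simp add: card_Un_disjoint)
  next
    case False
    then show ?thesis using nz unfolding Phi_def D by (simp add: amul_zero2)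
  qed
next
  case False
  then have r1: "r \<in> {m+1..m+n}" using r by auto
  note D = Dbasis_odd[OF r1]
  show ?thesis
  proof (cases "r \<in> v")
    case rv: True
    have C: "(\<beta>, v - {r}) \<in> Aidx p m n t" using Aidx_remove[OF B] .
    have "amul_basis p m n t (\<alpha>, u) (\<beta>, v - {r}) (\<gamma>, w) \<noteq> (0::'a)"
      using nz rv unfolding Phi_def D by (simp add: amul_amono_smul[OF A C])
    then have "(\<gamma>, w) \<in> Aidx p m n t" "u \<inter> (v - {r}) = {}" "w = u \<union> (v - {r})"
      unfolding amul_basis_val by (auto split: if_splits)
    moreover have "tau m r = 1" using r1 by (simp add: tau_def)
    moreover have "card (v - {r}) + 1 = card v"
    proof -
      have "card v > 0" using rv finite_Aidx_set[OF B] by (auto simp: card_gt_0_iff)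
      then show ?thesis using card_Diff_singleton[OF rv] by simp
    qed
    ultimately show ?thesis using finite_Aidx_set[OF A] finite_Aidx_set[OF B]
      by (simp add: card_Un_disjoint)
  next
    case False
    then show ?thesis using nz unfolding Phi_def D by (simp add: amul_zero2)
  qed
qed

lemma par_aux: "(cw::nat) + tr = cu + cv \<Longrightarrow> even (cu + tr) \<Longrightarrow> even (cv + ts) \<Longrightarrow> even (cw + ts)"
  by presburger

lemma wbr_basis_support:
  assumes b1: "(\<alpha>, u, r) \<in> Widx p m n t" and b2: "(\<beta>, v, s) \<in> Widx p m n t"
    and nz: "wbr_basis p m n t (\<alpha>, u, r) (\<beta>, v, s) (\<gamma>, w, s') \<noteq> (0::'a::field)"
  shows "(\<gamma>, w, s') \<in> Widx p m n t \<and> (even (card u + tau m r) \<longrightarrow> even (card v + tau m s) \<longrightarrow> even (card w + tau m s'))"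
proof -
  have A: "(\<alpha>, u) \<in> Aidx p m n t" "r \<in> {1..m+n}" using b1 by (auto simp: Widx_iff)
  have B: "(\<beta>, v) \<in> Aidx p m n t" "s \<in> {1..m+n}" using b2 by (auto simp: Widx_iff)
  consider (t1) "s' = s" "Phi p m n t r (\<alpha>, u) (\<beta>, v) (\<gamma>, w) \<noteq> (0::'a)"
    | (t2) "s' = r" "Phi p m n t s (\<beta>, v) (\<alpha>, u) (\<gamma>, w) \<noteq> (0::'a)"
    using nz unfolding wbr_basis_Phi by (cases "Phi p m n t r (\<alpha>, u) (\<beta>, v) (\<gamma>, w) = (0::'a)") (auto split: if_splits)
  then show ?thesis
  proof cases
    case t1
    from Phi_support[OF A(1) B(1) A(2) t1(2)] have
      "(\<gamma>, w) \<in> Aidx p m n t" "card w + tau m r = card u + card v" by auto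
    then show ?thesis using t1 B par_aux[of "card w" "tau m r" "card u" "card v" "tau m s"] by (simp add: Widx_iff)
  next
    case t2
    from Phi_support[OF B(1) A(1) B(2) t2(2)] have
      "(\<gamma>, w) \<in> Aidx p m n t" "card w + tau m s = card v + card u" by auto
    then show ?thesis using t2 A par_aux[of "card w" "tau m s" "card v" "card u" "tau m r"] by (simp add: Widx_iff add.commute)
  qed
qed

lemma wbr_Weven:
  assumes X: "X \<in> Weven p m n t" and Y: "Y \<in> Weven p m n t"
  shows "wbr p m n t X Y \<in> Weven p m n t"
proof -
  have *: "c \<in> Widx p m n t \<and> even (card (fst (snd c)) + tau m (snd (snd c)))" if nz: "wbr p m n t X Y c \<noteq> (0::'a)" for c
  proof -
    obtain b1 where b1: "b1 \<in> Widx p m n t" "(\<Sum>b2\<in>Widx p m n t. X b1 * Y b2 * wbr_basis p m n t b1 b2 c) \<noteq> 0"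
      using nz unfolding wbr_def by (meson sum.not_neutral_contains_not_neutral)
    obtain b2 where b2: "b2 \<in> Widx p m n t" "X b1 * Y b2 * wbr_basis p m n t b1 b2 c \<noteq> 0"
      using b1(2) by (meson sum.not_neutral_contains_not_neutral)
    obtain \<alpha> u r where e1: "b1 = (\<alpha>, u, r)" by (cases b1) auto
    obtain \<beta> v s where e2: "b2 = (\<beta>, v, s)" by (cases b2) auto
    obtain \<gamma> w s' where e3: "c = (\<gamma>, w, s')" by (cases c) auto
    have "X (\<alpha>, u, r) \<noteq> 0" "Y (\<beta>, v, s) \<noteq> 0" "wbr_basis p m n t (\<alpha>, u, r) (\<beta>, v, s) (\<gamma>, w, s') \<noteq> (0::'a)"
      using b2(2) e1 e2 e3 by auto
    then have "even (card u + tau m r)" "even (card v + tau m s)" using X Y by (auto simp: Weven_def)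
    moreover note wbr_basis_support[OF b1(1)[unfolded e1] b2(1)[unfolded e2] \<open>wbr_basis _ _ _ _ _ _ _ \<noteq> 0\<close>]
    ultimately show ?thesis using e3 by simp
  qed
  show ?thesis unfolding Weven_def
  proof (intro CollectI conjI allI impI)
    fix b assume "b \<notin> Widx p m n t" then show "wbr p m n t X Y b = 0" using * by blast
  next
    fix \<alpha> u r assume "wbr p m n t X Y (\<alpha>, u, r) \<noteq> 0"
    then show "even (card u + tau m r)" using *[of "(\<alpha>, u, r)"] by simp
  qed
qed


lemma amul_basis_zero_right:
  assumes "b \<in> Aidx p m n t"
  shows "amul_basis p m n t b (\<lambda>_. 0, {}) = (amono b :: aidx \<Rightarrow> 'a::field)"
  using assms by (cases b) (simp add: amul_basis_def)

lemma prod_single1: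
  assumes "l \<in> {1..(m::nat)}"
  shows "(\<Prod>j\<in>{1..m}. of_nat (((\<lambda>_. 0)(l := b)) j + x j choose ((\<lambda>_. 0)(l := b)) j)) = (of_nat (b + x l choose b) :: 'a::field)"
  using assms by (subst prod_split_i[OF assms]) (simp add: prod.neutral)

lemma prod_single2:
  assumes "l \<in> {1..(m::nat)}"
  shows "(\<Prod>j\<in>{1..m}. of_nat (x j + ((\<lambda>_. 0)(l := b)) j choose x j)) = (of_nat (x l + b choose x l) :: 'a::field)"
  using assms by (subst prod_split_i[OF assms]) (simp add: prod.neutral)

lemma osign_single:
  assumes "k \<notin> v" "finite v"
  shows "osign {k} v = ((-1) ^ card {l \<in> v. l < k} :: 'a::field)"
proof -
  have "{(k', l). k' \<in> {k} \<and> l \<in> v \<and> l < k'} = (\<lambda>l. (k, l)) ` {l \<in> v. l < k}" by auto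
  moreover have "card ((\<lambda>l. (k, l)) ` {l \<in> v. l < k}) = card {l \<in> v. l < k}"
    by (rule card_image) (auto simp: inj_on_def)
  ultimately show ?thesis by (simp add: osign_def)
qed

lemma wbr_basis_evenG:
  assumes B: "(\<beta>, {}) \<in> Aidx p m n t" and c0: "c0 \<in> {1..m}" and E: "(\<alpha>', u, s) \<in> Widx p m n t"
  shows "wbr_basis p m n t (\<beta>, {}, c0) (\<alpha>', u, s) (\<gamma>, w, s'') =
     (if s'' = s \<and> 1 \<le> \<alpha>' c0 then amul_basis p m n t (\<beta>, {}) (\<alpha>'(c0 := \<alpha>' c0 - 1), u) (\<gamma>, w) else 0)
     - (if s'' = c0 \<and> s \<in> {1..m} \<and> 1 \<le> \<beta> s then amul_basis p m n t (\<alpha>', u) (\<beta>(s := \<beta> s - 1), {}) (\<gamma>, w) else (0::'a::field))"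
proof -
  have A: "(\<alpha>', u) \<in> Aidx p m n t" "s \<in> {1..m+n}" using E by (auto simp: Widx_iff)
  have tc: "tau m c0 = 0" using c0 by (simp add: tau_def)
  have T1: "Phi p m n t c0 (\<beta>, {}) (\<alpha>', u) (\<gamma>, w) = (if 1 \<le> \<alpha>' c0 then amul_basis p m n t (\<beta>, {}) (\<alpha>'(c0 := \<alpha>' c0 - 1), u) (\<gamma>, w) else (0::'a))"
  proof (cases "1 \<le> \<alpha>' c0")
    case True
    show ?thesis unfolding Phi_def Dbasis_even[OF c0] if_P[OF True] amul_amono_amono[OF B Aidx_dec[OF A(1)]] ..
  next
    case False
    show ?thesis unfolding Phi_def Dbasis_even[OF c0] if_not_P[OF False] amul_zero2 by simp
  qed
  have T2: "Phi p m n t s (\<alpha>', u) (\<beta>, {}) (\<gamma>, w) = (if s \<in> {1..m} \<and> 1 \<le> \<beta> s then amul_basis p m n t (\<alpha>', u) (\<beta>(s := \<beta> s - 1), {}) (\<gamma>, w) else (0::'a))"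
  proof (cases "s \<in> {1..m}")
    case sY0: True
    show ?thesis
    proof (cases "1 \<le> \<beta> s")
      case True
      show ?thesis unfolding Phi_def Dbasis_even[OF sY0] if_P[OF True] amul_amono_amono[OF A(1) Aidx_dec[OF B]] using sY0 True by simp
    next
      case False
      show ?thesis unfolding Phi_def Dbasis_even[OF sY0] if_not_P[OF False] amul_zero2 using False by simp
    qed
  next
    case False
    then have "s \<in> {m+1..m+n}" using A(2) by auto
    then show ?thesis unfolding Phi_def Dbasis_odd[OF \<open>s \<in> {m+1..m+n}\<close>] using False by (simp add: amul_zero2)
  qed
  show ?thesis unfolding wbr_basis_Phi T1 T2 tc by simp
qed

lemma evb_apply: "evb b c = (if c = b then 1 else 0)"
  by (simp add: evb_def)

lemma wbr_toral_even:
  assumes a: "a \<in> {1..m}" and E: "(\<alpha>, u, s) \<in> Widx p m n t" and H: "((\<lambda>_. 0)(a := 1), {}) \<in> Aidx p m n t"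
  shows "wbr p m n t (evb ((\<lambda>_. 0)(a := 1), {}, a)) (evb (\<alpha>, u, s)) = (\<lambda>c. (of_nat (\<alpha> a) - (if s = a then 1 else 0)) * (evb (\<alpha>, u, s) c :: 'a::field))"
proof
  fix c :: widx
  obtain \<gamma> w s'' where c: "c = (\<gamma>, w, s'')" by (cases c) auto
  have HW: "((\<lambda>_. 0)(a := 1), {}, a) \<in> Widx p m n t" using H a by (simp add: Widx_iff)
  have A: "(\<alpha>, u) \<in> Aidx p m n t" using E by (simp add: Widx_iff)
  have t1: "(if s'' = s \<and> 1 \<le> \<alpha> a then amul_basis p m n t ((\<lambda>_. 0)(a := 1), {}) (\<alpha>(a := \<alpha> a - 1), u) (\<gamma>, w) else 0)
     = (if s'' = s \<and> \<gamma> = \<alpha> \<and> w = u then of_nat (\<alpha> a) else (0::'a))"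
  proof (cases "1 \<le> \<alpha> a")
    case True
    have sum: "(\<lambda>j. ((\<lambda>_. 0)(a := 1)) j + (\<alpha>(a := \<alpha> a - 1)) j) = \<alpha>" using True by (auto simp: fun_eq_iff)
    have pr: "(\<Prod>j\<in>{1..m}. of_nat (((\<lambda>_. 0)(a := 1)) j + (\<alpha>(a := \<alpha> a - 1)) j choose ((\<lambda>_. 0)(a := 1)) j)) = (of_nat (\<alpha> a) :: 'a)"
      unfolding prod_single1[OF a] using True by simp
    show ?thesis unfolding amul_basis_val sum pr using True A by auto
  next
    case False then have "\<alpha> a = 0" by simp
    then show ?thesis by auto
  qed
  have t2: "(if s'' = a \<and> s \<in> {1..m} \<and> 1 \<le> ((\<lambda>_. 0::nat)(a := 1)) s then amul_basis p m n t (\<alpha>, u) (((\<lambda>_. 0)(a := 1))(s := ((\<lambda>_. 0)(a := 1)) s - 1), {}) (\<gamma>, w) else 0)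
     = (if s'' = a \<and> s = a \<and> \<gamma> = \<alpha> \<and> w = u then 1 else (0::'a))"
  proof (cases "s = a")
    case True
    have z: "((\<lambda>_. 0)(a := 1))(s := ((\<lambda>_. 0)(a := 1)) s - 1) = (\<lambda>_. 0::nat)" using True by (auto simp: fun_eq_iff)
    have cond: "(s'' = a \<and> s \<in> {1..m} \<and> 1 \<le> ((\<lambda>_. 0::nat)(a := 1)) s) \<longleftrightarrow> s'' = a" using True a by simp
    show ?thesis unfolding z amul_basis_zero_right[OF A] cond using True a by (auto simp: amono_def)
  next
    case False then show ?thesis by auto
  qed
  show "wbr p m n t (evb ((\<lambda>_. 0)(a := 1), {}, a)) (evb (\<alpha>, u, s)) c = (of_nat (\<alpha> a) - (if s = a then 1 else 0)) * (evb (\<alpha>, u, s) c :: 'a)"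
    unfolding wbr_evb[OF HW E] c wbr_basis_evenG[OF H a E] t1 t2 by (auto simp: evb_apply)
qed

lemma wbr_toral_odd:
  assumes k: "k \<in> {m+1..m+n}" and E: "(\<alpha>, u, s) \<in> Widx p m n t"
  shows "wbr p m n t (evb (\<lambda>_. 0, {k}, k)) (evb (\<alpha>, u, s)) = (\<lambda>c. ((if k \<in> u then 1 else 0) - (if s = k then 1 else 0)) * (evb (\<alpha>, u, s) c :: 'a::field))"
proof
  fix c :: widx
  obtain \<gamma> w s'' where c: "c = (\<gamma>, w, s'')" by (cases c) auto
  have HA: "(\<lambda>_. 0, {k}) \<in> Aidx p m n t" using k by (simp add: Aidx_iff)
  have HW: "(\<lambda>_. 0, {k}, k) \<in> Widx p m n t" using HA k by (simp add: Widx_iff)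
  have A: "(\<alpha>, u) \<in> Aidx p m n t" and s: "s \<in> {1..m+n}" using E by (auto simp: Widx_iff)
  have fu: "finite u" using finite_Aidx_set[OF A] .
  have tk: "tau m k = 1" using k by (simp add: tau_def)
  have sg: "((-1::'a) ^ ((card {k} + tau m k) * (card u + tau m s))) = 1"
    unfolding tk by (simp add: power_mult)
  have T1: "Phi p m n t k (\<lambda>_. 0, {k}) (\<alpha>, u) (\<gamma>, w) = (if k \<in> u \<and> \<gamma> = \<alpha> \<and> w = u then 1 else (0::'a))"
  proof (cases "k \<in> u")
    case True
    have C: "(\<alpha>, u - {k}) \<in> Aidx p m n t" using Aidx_remove[OF A] .
    have un: "{k} \<union> (u - {k}) = u" using True by auto
    have os: "osign {k} (u - {k}) = ((-1) ^ card {l \<in> u. l < k} :: 'a)"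
    proof -
      have "{l \<in> u - {k}. l < k} = {l \<in> u. l < k}" by auto
      then show ?thesis using osign_single[of k "u - {k}"] fu by simp
    qed
    have PE: "Phi p m n t k (\<lambda>_. 0, {k}) (\<alpha>, u) = (\<lambda>c. (-1) ^ card {l \<in> u. l < k} * (amul_basis p m n t (\<lambda>_. 0, {k}) (\<alpha>, u - {k}) c :: 'a))"
      unfolding Phi_def Dbasis_odd[OF k] if_P[OF True] using amul_amono_smul[OF HA C] .
    have mm: "((-1::'a) ^ N) * (-1) ^ N = 1" for N by (simp add: power_mult_distrib[symmetric])
    have dj: "{k} \<inter> (u - {k}) = {}" by auto
    show ?thesis unfolding PE amul_basis_val un os using True A dj mm by auto
  next
    case False
    show ?thesis unfolding Phi_def Dbasis_odd[OF k] using False by (simp add: amul_zero2)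
  qed
  have T2: "Phi p m n t s (\<alpha>, u) (\<lambda>_. 0, {k}) (\<gamma>, w) = (if s = k \<and> \<gamma> = \<alpha> \<and> w = u then 1 else (0::'a))"
  proof (cases "s \<in> {1..m}")
    case True
    then have "s \<noteq> k" using k by auto
    then show ?thesis unfolding Phi_def Dbasis_even[OF True] by (simp add: amul_zero2)
  next
    case False
    then have s1: "s \<in> {m+1..m+n}" using s by auto
    show ?thesis
    proof (cases "s = k")
      case True
      have "Phi p m n t s (\<alpha>, u) (\<lambda>_. 0, {k}) = (\<lambda>c. 1 * (amul_basis p m n t (\<alpha>, u) (\<lambda>_. 0, {}) c :: 'a))"
      proof -
        have e: "{l. l = k \<and> l < k} = {}" by auto
        show ?thesis unfolding Phi_def Dbasis_odd[OF s1] using True amul_amono_smul[OF A zero_Aidx, of 1] by (simp add: e)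
      qed
      then show ?thesis using True A by (simp add: amul_basis_zero_right amono_def)
    next
      case False
      then show ?thesis unfolding Phi_def Dbasis_odd[OF s1] by (simp add: amul_zero2)
    qed
  qed
  show "wbr p m n t (evb (\<lambda>_. 0, {k}, k)) (evb (\<alpha>, u, s)) c = ((if k \<in> u then 1 else 0) - (if s = k then 1 else 0)) * (evb (\<alpha>, u, s) c :: 'a)"
    unfolding wbr_evb[OF HW E] c wbr_basis_Phi
    unfolding T1 T2 sg by (auto simp: evb_apply)
qed


lemma small_inj:
  assumes ch: "CHAR('a::field) = p" and "a < p" "b < p" and eq: "of_nat a = (of_nat b :: 'a)"
  shows "a = b"
proof -
  have *: "x = y" if "x \<le> y" "y < p" "of_nat x = (of_nat y :: 'a)" for x y
  proof -
    have "of_nat (y - x) = (0::'a)" using that by (simp add: of_nat_diff)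
    then have "p dvd (y - x)" using ch by (simp add: of_nat_eq_0_iff_char_dvd)
    moreover have "y - x < p" using that by simp
    ultimately have "y - x = 0" by (meson dvd_imp_le not_less neq0_conv)
    then show ?thesis using that by simp
  qed
  show ?thesis
  proof (cases "a \<le> b")
    case True then show ?thesis using * assms by blast
  next
    case False then show ?thesis using *[of b a] assms by simp
  qed
qed

definition evenW :: "nat \<Rightarrow> nat \<Rightarrow> nat \<Rightarrow> (nat \<Rightarrow> nat) \<Rightarrow> widx \<Rightarrow> bool" where
  "evenW p m n t b \<longleftrightarrow> b \<in> Widx p m n t \<and> even (card (fst (snd b)) + tau m (snd (snd b)))"

lemma evb_Weven: "evenW p m n t b \<Longrightarrow> evb b \<in> Weven p m n t"
  by (cases b) (auto simp: evenW_def Weven_def evb_def)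

lemma evb_Wcomp: "evenW p m n t b \<Longrightarrow> evb b \<in> Wcomp p m n t (wdeg m b)"
  using evb_Weven[of p m n t b] by (auto simp: Wcomp_def evb_def)

lemma wdeg_ge: "wdeg m b \<ge> -1"
  by (cases b) (simp add: wdeg_def del: of_nat_sum)

lemma Wcomp_low: "X \<in> Wcomp p m n t j \<Longrightarrow> j < -1 \<Longrightarrow> X = (\<lambda>_. 0)"
proof (rule ext, rule ccontr)
  fix c assume "X \<in> Wcomp p m n t j" "j < -1" "X c \<noteq> 0"
  then have "wdeg m c = j" by (cases c) (auto simp: Wcomp_def)
  then show False using wdeg_ge[of m c] \<open>j < -1\<close> by simp
qed

lemma zero_Weven: "(\<lambda>_. 0) \<in> Weven p m n t"
  by (simp add: Weven_def)

lemma wbr_zero_left [simp]: "wbr p m n t (\<lambda>_. 0) Y = (\<lambda>_. (0::'a::field))"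
  by (simp add: wbr_def fun_eq_iff)

lemma wbr_zero_right [simp]: "wbr p m n t X (\<lambda>_. 0) = (\<lambda>_. (0::'a::field))"
  by (simp add: wbr_def fun_eq_iff)

lemma Weven_Widx: "X \<in> Weven p m n t \<Longrightarrow> X c \<noteq> 0 \<Longrightarrow> c \<in> Widx p m n t"
  by (cases c) (auto simp: Weven_def)

lemma shiftW_evb:
  assumes "E \<in> Widx p m n t"
  shows "shiftW p m n t l 1 (evb E) = (if 1 \<le> fst E l then evb (dnW l E) else (\<lambda>_. (0::'a::field)))"
proof -
  obtain \<alpha> u s where E: "E = (\<alpha>, u, s)" by (cases E) auto
  show ?thesis
  proof (rule ext)
    fix c :: widx
    obtain \<gamma> w s' where c: "c = (\<gamma>, w, s')" by (cases c) auto
    have "(\<gamma>(l := \<gamma> l + 1) = \<alpha>) \<longleftrightarrow> (1 \<le> \<alpha> l \<and> \<gamma> = \<alpha>(l := \<alpha> l - 1))"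
      by (auto simp: fun_eq_iff)
    moreover have "(\<alpha>(l := \<alpha> l - 1), u, s) \<in> Widx p m n t" if "1 \<le> \<alpha> l"
      using assms E Aidx_dec by (auto simp: Widx_iff)
    ultimately show "shiftW p m n t l 1 (evb E) c = (if 1 \<le> fst E l then evb (dnW l E) else (\<lambda>_. (0::'a))) c"
      using assms unfolding E c by (auto simp: shiftW_def evb_def dnW_def)
  qed
qed

lemma dnW_evenW:
  assumes "evenW p m n t E" "1 \<le> fst E l" and that: "l \<in> {1..m}"
  shows "evenW p m n t (dnW l E) \<and> wdeg m (dnW l E) < wdeg m E"
proof -
  obtain \<alpha> u s where E: "E = (\<alpha>, u, s)" by (cases E) auto
  have "(\<alpha>(l := \<alpha> l - 1), u) \<in> Aidx p m n t" using assms E Aidx_dec by (auto simp: evenW_def Widx_iff)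
  moreover have "wdeg m (\<alpha>(l := \<alpha> l - 1), u, s) < wdeg m (\<alpha>, u, s)"
  proof -
    have e: "(\<alpha>(l := \<alpha> l - 1))(l := (\<alpha>(l := \<alpha> l - 1)) l + 1) = \<alpha>" using assms E by (auto simp: fun_eq_iff)
    show ?thesis using wdeg_up[OF that, of "\<alpha>(l := \<alpha> l - 1)" 1 u s] unfolding e by simp
  qed
  ultimately show ?thesis using assms E by (auto simp: evenW_def Widx_iff dnW_def)
qed


locale dctx =
  fixes p m n r :: nat and t :: "nat \<Rightarrow> nat" and D :: "(widx \<Rightarrow> 'a::field) \<Rightarrow> widx \<Rightarrow> 'a"
  assumes ch: "CHAR('a) = p" and p3: "p > 3" and m3: "m \<ge> 3" and tpos: "\<forall>i\<in>{1..m}. t i \<ge> 1" and r1: "r \<ge> 1"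
    and DL: "\<And>X Y. X \<in> Weven p m n t \<Longrightarrow> Y \<in> Weven p m n t \<Longrightarrow> D (wbr p m n t X Y) = (\<lambda>c. wbr p m n t (D X) Y c + wbr p m n t X (D Y) c)"
    and DS: "\<And>a X. X \<in> Weven p m n t \<Longrightarrow> D (\<lambda>c. a * X c) = (\<lambda>c. a * D X c)"
    and DA: "\<And>X Y. X \<in> Weven p m n t \<Longrightarrow> Y \<in> Weven p m n t \<Longrightarrow> D (\<lambda>c. X c + Y c) = (\<lambda>c. D X c + D Y c)"
    and DH: "\<And>j X. X \<in> Wcomp p m n t j \<Longrightarrow> D X \<in> Wcomp p m n t (j - int (p ^ r))"
    and DB: "\<And>i. i \<in> {1..m} \<Longrightarrow> p ^ r \<le> p ^ t i - 1 \<Longrightarrow> D (evb ((\<lambda>_. 0)(i := p ^ r), {}, i)) (\<lambda>_. 0, {}, i) = 0"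
begin

lemma p1: "p > 1" using p3 by simp

lemma q_ge: "p ^ r \<ge> p" using r1 p1 by (simp add: self_le_power)

lemma ofq: "of_nat (p ^ r) = (0::'a)"
  using ch r1 by (simp add: of_nat_eq_0_iff_char_dvd)

lemma ofp: "of_nat p = (0::'a)"
  by (metis ch of_nat_CHAR)

lemma q3: "p ^ r > 3" using q_ge p3 by linarith

lemma q3i: "int (p ^ r) > 3" using q3 by linarith

lemma small_ne: "k < p \<Longrightarrow> k \<noteq> 0 \<Longrightarrow> of_nat k \<noteq> (0::'a)"
  using ch by (simp add: of_nat_eq_0_iff_char_dvd) (meson dvd_imp_le linorder_not_le neq0_conv)

lemma D_zero: "D (\<lambda>_. 0) = (\<lambda>_. 0)"
  using DS[OF zero_Weven, of 0] by simp

lemma D_Weven: "X \<in> Wcomp p m n t j \<Longrightarrow> D X \<in> Weven p m n t"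
  using DH by (auto simp: Wcomp_def)

lemma D_low: "X \<in> Wcomp p m n t j \<Longrightarrow> j < int (p ^ r) - 1 \<Longrightarrow> D X = (\<lambda>_. 0)"
  using DH Wcomp_low by fastforce

lemma D_evb_low: "evenW p m n t b \<Longrightarrow> wdeg m b < int (p ^ r) - 1 \<Longrightarrow> D (evb b) = (\<lambda>_. 0)"
  using D_low evb_Wcomp by blast

lemma D_evb_Weven: "evenW p m n t b \<Longrightarrow> D (evb b) \<in> Weven p m n t"
  using D_Weven evb_Wcomp by blast

lemma Dvec_evenW: "l \<in> {1..m} \<Longrightarrow> evenW p m n t (\<lambda>_. 0, {}, l)"
  by (simp add: evenW_def Widx_iff tau_def)

lemma alpha_free:
  assumes E: "evenW p m n t E"
    and IH: "\<And>b. evenW p m n t b \<Longrightarrow> wdeg m b < wdeg m E \<Longrightarrow> D (evb b) = (\<lambda>_. 0)"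
    and nz: "D (evb E) c \<noteq> 0"
  shows "fst c = (\<lambda>_. 0)"
proof -
  let ?F = "D (evb E)"
  have FW: "?F \<in> Weven p m n t" using D_evb_Weven[OF E] .
  have cW: "c \<in> Widx p m n t" using Weven_Widx[OF FW nz] .
  obtain \<gamma> w s' where c: "c = (\<gamma>, w, s')" by (cases c) auto
  have EW: "E \<in> Widx p m n t" using E by (simp add: evenW_def)
  have "\<gamma> l = 0" for l
  proof (cases "l \<in> {1..m}")
    case False then show ?thesis using cW c by (auto simp: Widx_iff Aidx_iff)
  next
    case l: True
    show ?thesis
    proof (rule ccontr)
      assume g: "\<gamma> l \<noteq> 0"
      have DvW: "Dvec l \<in> Weven p m n t" unfolding Dvec_evb by (rule evb_Weven[OF Dvec_evenW[OF l]])
      have D0: "D (Dvec l) = (\<lambda>_. 0)" unfolding Dvec_evb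
        by (rule D_evb_low[OF Dvec_evenW[OF l]]) (use q3i p1 in \<open>simp add: wdeg_def\<close>)
      have "D (wbr p m n t (Dvec l) (evb E)) = (\<lambda>_. 0)"
      proof -
        have "wbr p m n t (Dvec l) (evb E) = (if 1 \<le> fst E l then evb (dnW l E) else (\<lambda>_. (0::'a)))"
          unfolding wbr_Dvec[OF l] shiftW_evb[OF EW] ..
        moreover have "D (evb (dnW l E)) = (\<lambda>_. 0)" if "1 \<le> fst E l"
          using IH dnW_evenW[OF E that l] by blast
        ultimately show ?thesis using D_zero by simp
      qed
      then have "wbr p m n t (Dvec l) ?F = (\<lambda>_. 0)"
        using DL[OF DvW evb_Weven[OF E]] D0 by (simp add: fun_eq_iff)
      then have "shiftW p m n t l 1 ?F (\<gamma>(l := \<gamma> l - 1), w, s') = 0"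
        unfolding wbr_Dvec[OF l] by simp
      moreover have "(\<gamma>(l := \<gamma> l - 1))(l := (\<gamma>(l := \<gamma> l - 1)) l + 1) = \<gamma>" using g by (auto simp: fun_eq_iff)
      ultimately have "?F c = 0" using cW c by (simp add: shiftW_def)
      then show False using nz by simp
    qed
  qed
  then show ?thesis using c by (simp add: fun_eq_iff)
qed

lemma eigen:
  fixes lam :: "widx \<Rightarrow> 'a"
  assumes E: "evenW p m n t E" and h: "evenW p m n t h" and h0: "wdeg m h = 0"
    and lam: "\<And>b. b \<in> Widx p m n t \<Longrightarrow> wbr p m n t (evb h) (evb b) = (\<lambda>c. lam b * evb b c)"
    and nz: "D (evb E) c \<noteq> 0"
  shows "lam E = lam c"
proof -
  let ?F = "D (evb E)"
  have FW: "?F \<in> Weven p m n t" using D_evb_Weven[OF E] .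
  have cW: "c \<in> Widx p m n t" using Weven_Widx[OF FW nz] .
  have hW: "h \<in> Widx p m n t" using h by (simp add: evenW_def)
  have EW: "E \<in> Widx p m n t" using E by (simp add: evenW_def)
  have Dh: "D (evb h) = (\<lambda>_. 0)" by (rule D_evb_low[OF h]) (use h0 q3i in linarith)
  have "D (wbr p m n t (evb h) (evb E)) = wbr p m n t (evb h) ?F"
    using DL[OF evb_Weven[OF h] evb_Weven[OF E]] Dh by (simp add: fun_eq_iff)
  moreover have "D (wbr p m n t (evb h) (evb E)) = (\<lambda>c. lam E * ?F c)"
    unfolding lam[OF EW] using DS[OF evb_Weven[OF E]] .
  moreover have "wbr p m n t (evb h) ?F c = ?F c * lam c"
  proof -
    have "wbr p m n t (evb h) ?F c = (\<Sum>b2\<in>Widx p m n t. ?F b2 * wbr_basis p m n t h b2 c)"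
    proof -
      have "wbr p m n t (evb h) ?F c = (\<Sum>b1\<in>Widx p m n t. if b1 = h then (\<Sum>b2\<in>Widx p m n t. ?F b2 * wbr_basis p m n t b1 b2 c) else 0)"
        unfolding wbr_def evb_def by (intro sum.cong refl) (auto simp: sum_distrib_left)
      then show ?thesis using hW finite_Widx by (simp add: sum.delta')
    qed
    also have "\<dots> = (\<Sum>b2\<in>Widx p m n t. if b2 = c then ?F b2 * lam b2 else 0)"
    proof (rule sum.cong[OF refl])
      fix b2 assume b2: "b2 \<in> Widx p m n t"
      have "wbr_basis p m n t h b2 c = lam b2 * evb b2 c"
        using wbr_evb[OF hW b2, symmetric] lam[OF b2] by (metis)
      then show "?F b2 * wbr_basis p m n t h b2 c = (if b2 = c then ?F b2 * lam b2 else 0)"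
        by (auto simp: evb_def)
    qed
    also have "\<dots> = ?F c * lam c" using cW finite_Widx by (simp add: sum.delta')
    finally show ?thesis .
  qed
  ultimately have "lam E * ?F c = ?F c * lam c" by metis
  then show ?thesis using nz by (simp add: mult.commute)
qed

end


lemma decomp1:
  assumes i: "i \<in> {1..m}" and E: "(\<alpha>, u, s) \<in> Widx p m n t" and Q1: "1 \<le> Q" and Qa: "Q \<le> \<alpha> i"
  shows "wbr p m n t (evb ((\<lambda>_. 0)(i := Q), {}, i)) (evb (\<alpha>(i := \<alpha> i - (Q - 1)), u, s))
    = (\<lambda>c. (of_nat (\<alpha> i choose Q) - (if s = i then of_nat (\<alpha> i choose (\<alpha> i - (Q - 1))) else 0)) * (evb (\<alpha>, u, s) c :: 'a::field))"
proof
  fix c :: widx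
  obtain \<gamma> w s'' where c: "c = (\<gamma>, w, s'')" by (cases c) auto
  have A: "(\<alpha>, u) \<in> Aidx p m n t" and s: "s \<in> {1..m+n}" using E by (auto simp: Widx_iff)
  have aQ: "\<alpha> i \<le> p ^ t i - 1" using A i by (auto simp: Aidx_iff)
  have BA: "((\<lambda>_. 0)(i := Q), {}) \<in> Aidx p m n t" using i Qa aQ by (auto simp: Aidx_iff)
  have GW: "((\<lambda>_. 0)(i := Q), {}, i) \<in> Widx p m n t" using BA i by (simp add: Widx_iff)
  have E'A: "(\<alpha>(i := \<alpha> i - (Q - 1)), u) \<in> Aidx p m n t" using Aidx_dec[OF A] .
  have E'W: "(\<alpha>(i := \<alpha> i - (Q - 1)), u, s) \<in> Widx p m n t" using E'A s by (simp add: Widx_iff)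
  have t1: "(if s'' = s \<and> 1 \<le> (\<alpha>(i := \<alpha> i - (Q - 1))) i then amul_basis p m n t ((\<lambda>_. 0)(i := Q), {}) ((\<alpha>(i := \<alpha> i - (Q - 1)))(i := (\<alpha>(i := \<alpha> i - (Q - 1))) i - 1), u) (\<gamma>, w) else 0)
      = (if s'' = s \<and> \<gamma> = \<alpha> \<and> w = u then of_nat (\<alpha> i choose Q) else (0::'a))"
  proof -
    have x: "(\<alpha>(i := \<alpha> i - (Q - 1)))(i := (\<alpha>(i := \<alpha> i - (Q - 1))) i - 1) = \<alpha>(i := \<alpha> i - Q)" using Q1 Qa by simp
    have sm: "(\<lambda>j. ((\<lambda>_. 0::nat)(i := Q)) j + (\<alpha>(i := \<alpha> i - Q)) j) = \<alpha>" using Qa by (auto simp: fun_eq_iff)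
    have pr: "(\<Prod>j\<in>{1..m}. of_nat (((\<lambda>_. 0)(i := Q)) j + (\<alpha>(i := \<alpha> i - Q)) j choose ((\<lambda>_. 0)(i := Q)) j)) = (of_nat (\<alpha> i choose Q) :: 'a)"
      unfolding prod_single1[OF i] using Qa by simp
    have c1: "1 \<le> (\<alpha>(i := \<alpha> i - (Q - 1))) i" using Q1 Qa by simp
    show ?thesis unfolding x amul_basis_val sm pr using c1 A by auto
  qed
  have t2: "(if s'' = i \<and> s \<in> {1..m} \<and> 1 \<le> ((\<lambda>_. 0::nat)(i := Q)) s then amul_basis p m n t (\<alpha>(i := \<alpha> i - (Q - 1)), u) (((\<lambda>_. 0)(i := Q))(s := ((\<lambda>_. 0)(i := Q)) s - 1), {}) (\<gamma>, w) else 0)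
      = (if s'' = i \<and> s = i \<and> \<gamma> = \<alpha> \<and> w = u then of_nat (\<alpha> i choose (\<alpha> i - (Q - 1))) else (0::'a))"
  proof (cases "s = i")
    case True
    have cond: "(s'' = i \<and> s \<in> {1..m} \<and> 1 \<le> ((\<lambda>_. 0::nat)(i := Q)) s) \<longleftrightarrow> s'' = i" using True i Q1 by simp
    have x: "((\<lambda>_. 0::nat)(i := Q))(s := ((\<lambda>_. 0::nat)(i := Q)) s - 1) = (\<lambda>_. 0)(i := Q - 1)" using True by simp
    have sm: "(\<lambda>j. (\<alpha>(i := \<alpha> i - (Q - 1))) j + ((\<lambda>_. 0::nat)(i := Q - 1)) j) = \<alpha>" using Qa Q1 by (auto simp: fun_eq_iff)
    have pr: "(\<Prod>j\<in>{1..m}. of_nat ((\<alpha>(i := \<alpha> i - (Q - 1))) j + ((\<lambda>_. 0)(i := Q - 1)) j choose (\<alpha>(i := \<alpha> i - (Q - 1))) j)) = (of_nat (\<alpha> i choose (\<alpha> i - (Q - 1))) :: 'a)"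
      unfolding prod_single2[OF i] using Qa Q1 by simp
    show ?thesis unfolding cond x amul_basis_val sm pr using True A by auto
  next
    case False
    then show ?thesis by auto
  qed
  show "wbr p m n t (evb ((\<lambda>_. 0)(i := Q), {}, i)) (evb (\<alpha>(i := \<alpha> i - (Q - 1)), u, s)) c
    = (of_nat (\<alpha> i choose Q) - (if s = i then of_nat (\<alpha> i choose (\<alpha> i - (Q - 1))) else 0)) * (evb (\<alpha>, u, s) c :: 'a)"
    unfolding wbr_evb[OF GW E'W] c wbr_basis_evenG[OF BA i E'W] t1 t2 by (auto simp: evb_apply)
qed

lemma decomp2:
  assumes l: "l \<in> {1..m}" and l': "l' \<in> {1..m}" and ll: "l \<noteq> l'" and ls: "l \<noteq> s"
    and E: "(\<alpha>, u, s) \<in> Widx p m n t" and E'A: "(\<alpha>(l := 0, l' := \<alpha> l' + 1), u) \<in> Aidx p m n t"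
  shows "wbr p m n t (evb ((\<lambda>_. 0)(l := \<alpha> l), {}, l')) (evb (\<alpha>(l := 0, l' := \<alpha> l' + 1), u, s)) = (evb (\<alpha>, u, s) :: widx \<Rightarrow> 'a::field)"
proof
  fix c :: widx
  obtain \<gamma> w s'' where c: "c = (\<gamma>, w, s'')" by (cases c) auto
  have A: "(\<alpha>, u) \<in> Aidx p m n t" and s: "s \<in> {1..m+n}" using E by (auto simp: Widx_iff)
  have BA: "((\<lambda>_. 0)(l := \<alpha> l), {}) \<in> Aidx p m n t" using A l by (auto simp: Aidx_iff)
  have GW: "((\<lambda>_. 0)(l := \<alpha> l), {}, l') \<in> Widx p m n t" using BA l' by (simp add: Widx_iff)
  have E'W: "(\<alpha>(l := 0, l' := \<alpha> l' + 1), u, s) \<in> Widx p m n t" using E'A s by (simp add: Widx_iff)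
  have t1: "(if s'' = s \<and> 1 \<le> (\<alpha>(l := 0, l' := \<alpha> l' + 1)) l' then amul_basis p m n t ((\<lambda>_. 0)(l := \<alpha> l), {}) ((\<alpha>(l := 0, l' := \<alpha> l' + 1))(l' := (\<alpha>(l := 0, l' := \<alpha> l' + 1)) l' - 1), u) (\<gamma>, w) else 0)
      = (if s'' = s \<and> \<gamma> = \<alpha> \<and> w = u then 1 else (0::'a))"
  proof -
    have x: "(\<alpha>(l := 0, l' := \<alpha> l' + 1))(l' := (\<alpha>(l := 0, l' := \<alpha> l' + 1)) l' - 1) = \<alpha>(l := 0)" using ll by (auto simp: fun_eq_iff)
    have sm: "(\<lambda>j. ((\<lambda>_. 0::nat)(l := \<alpha> l)) j + (\<alpha>(l := 0)) j) = \<alpha>" by (auto simp: fun_eq_iff)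
    have pr: "(\<Prod>j\<in>{1..m}. of_nat (((\<lambda>_. 0)(l := \<alpha> l)) j + (\<alpha>(l := 0)) j choose ((\<lambda>_. 0)(l := \<alpha> l)) j)) = (1 :: 'a)"
      unfolding prod_single1[OF l] by simp
    have c1: "1 \<le> (\<alpha>(l := 0, l' := \<alpha> l' + 1)) l'" by simp
    show ?thesis unfolding x amul_basis_val sm pr using c1 A by auto
  qed
  have t2: "(if s'' = l' \<and> s \<in> {1..m} \<and> 1 \<le> ((\<lambda>_. 0::nat)(l := \<alpha> l)) s then amul_basis p m n t (\<alpha>(l := 0, l' := \<alpha> l' + 1), u) (((\<lambda>_. 0)(l := \<alpha> l))(s := ((\<lambda>_. 0)(l := \<alpha> l)) s - 1), {}) (\<gamma>, w) else (0::'a)) = 0"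
    using ls by simp
  show "wbr p m n t (evb ((\<lambda>_. 0)(l := \<alpha> l), {}, l')) (evb (\<alpha>(l := 0, l' := \<alpha> l' + 1), u, s)) c = (evb (\<alpha>, u, s) c :: 'a)"
    unfolding wbr_evb[OF GW E'W] c wbr_basis_evenG[OF BA l' E'W] t1 t2 by (auto simp: evb_apply)
qed


context dctx
begin

lemma toral_even_h:
  assumes a: "a \<in> {1..m}"
  shows "evenW p m n t ((\<lambda>_. 0)(a := 1), {}, a)" "wdeg m ((\<lambda>_. 0)(a := 1), {}, a) = 0"
    "((\<lambda>_. 0)(a := 1), {}) \<in> Aidx p m n t"
proof -
  have ta: "t a \<ge> 1" using tpos a by blast
  have "p ^ t a \<ge> p" using p1 ta by (simp add: self_le_power)
  then show A: "((\<lambda>_. 0)(a := 1), {}) \<in> Aidx p m n t" using a p3 by (auto simp: Aidx_iff)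
  then show "evenW p m n t ((\<lambda>_. 0)(a := 1), {}, a)" using a by (simp add: evenW_def Widx_iff tau_def)
  show "wdeg m ((\<lambda>_. 0)(a := 1), {}, a) = 0"
    using a by (simp add: wdeg_def sum.remove)
qed

lemma EWt:
  assumes E: "evenW p m n t E" and a: "a \<in> {1..m}" and nz: "D (evb E) c \<noteq> 0"
  shows "of_nat (fst E a) - (if snd (snd E) = a then 1 else 0) = (of_nat (fst c a) - (if snd (snd c) = a then 1 else 0) :: 'a)"
proof -
  note h = toral_even_h[OF a]
  have "(\<lambda>b. of_nat (fst b a) - (if snd (snd b) = a then 1 else (0::'a))) E = (\<lambda>b. of_nat (fst b a) - (if snd (snd b) = a then 1 else 0)) c"
  proof (rule eigen[OF E h(1) h(2) _ nz])
    fix b assume b: "b \<in> Widx p m n t"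
    obtain \<beta> v s where bb: "b = (\<beta>, v, s)" by (cases b) auto
    show "wbr p m n t (evb ((\<lambda>_. 0)(a := 1), {}, a)) (evb b) = (\<lambda>c. (of_nat (fst b a) - (if snd (snd b) = a then 1 else 0)) * evb b c)"
      unfolding bb using wbr_toral_even[OF a b[unfolded bb] h(3)] by simp
  qed
  then show ?thesis by simp
qed

lemma OWt:
  assumes E: "evenW p m n t E" and k: "k \<in> {m+1..m+n}" and nz: "D (evb E) c \<noteq> 0"
  shows "(if k \<in> fst (snd E) then 1 else 0) - (if snd (snd E) = k then 1 else 0)
       = ((if k \<in> fst (snd c) then 1 else 0) - (if snd (snd c) = k then 1 else 0) :: 'a)"
proof -
  have hW: "evenW p m n t (\<lambda>_. 0, {k}, k)" using k by (simp add: evenW_def Widx_iff Aidx_iff tau_def)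
  have h0: "wdeg m (\<lambda>_. 0, {k}, k) = 0" by (simp add: wdeg_def)
  have "(\<lambda>b. (if k \<in> fst (snd b) then 1 else 0) - (if snd (snd b) = k then 1 else (0::'a))) E
      = (\<lambda>b. (if k \<in> fst (snd b) then 1 else 0) - (if snd (snd b) = k then 1 else 0)) c"
  proof (rule eigen[OF E hW h0 _ nz])
    fix b assume b: "b \<in> Widx p m n t"
    obtain \<beta> v s where bb: "b = (\<beta>, v, s)" by (cases b) auto
    show "wbr p m n t (evb (\<lambda>_. 0, {k}, k)) (evb b) = (\<lambda>c. ((if k \<in> fst (snd b) then 1 else 0) - (if snd (snd b) = k then 1 else 0)) * evb b c)"
      unfolding bb using wbr_toral_odd[OF k b[unfolded bb]] by simp
  qed
  then show ?thesis by simp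
qed

lemma base0:
  assumes i: "i \<in> {1..m}" and qi: "p ^ r \<le> p ^ t i - 1"
  shows "D (evb ((\<lambda>_. 0)(i := p ^ r), {}, i)) = (\<lambda>_. 0)"
proof (rule ccontr)
  let ?E = "((\<lambda>_. 0::nat)(i := p ^ r), {}, i)"
  assume "D (evb ?E) \<noteq> (\<lambda>_. 0)"
  then obtain c where nz: "D (evb ?E) c \<noteq> 0" by (meson ext)
  have EA: "((\<lambda>_. 0::nat)(i := p ^ r), {}) \<in> Aidx p m n t" using i qi by (auto simp: Aidx_iff)
  have E: "evenW p m n t ?E" using EA i by (simp add: evenW_def Widx_iff tau_def)
  have dE: "wdeg m ?E = int (p ^ r) - 1" using i by (simp add: wdeg_def sum.remove)
  have IH: "D (evb b) = (\<lambda>_. 0)" if "evenW p m n t b" "wdeg m b < wdeg m ?E" for b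
    using D_evb_low that dE by simp
  have g0: "fst c = (\<lambda>_. 0)" using alpha_free[OF E IH nz] by blast
  have FW: "D (evb ?E) \<in> Wcomp p m n t (wdeg m ?E - int (p ^ r))" using DH[OF evb_Wcomp[OF E]] .
  obtain w s' where c: "c = (\<lambda>_. 0, w, s')" using g0 by (cases c) auto
  have cW: "c \<in> Widx p m n t" using FW nz by (auto simp: Wcomp_def Weven_def c)
  have "wdeg m c = -1" using FW nz dE unfolding c by (auto simp: Wcomp_def)
  then have "card w = 0" by (simp add: c wdeg_def)
  moreover have "finite w" using cW by (auto simp: c Widx_iff intro: finite_Aidx_set)
  ultimately have w0: "w = {}" by simp
  have "(0::'a) - 1 = 0 - (if s' = i then 1 else 0)" using EWt[OF E i nz] ofp r1 by (simp add: c power_0_left)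
  then have "s' = i" by (cases "s' = i") auto
  then have "c = (\<lambda>_. 0, {}, i)" using c w0 by simp
  then show False using nz DB[OF i qi] by simp
qed

end


lemma sum_indicator_card:
  assumes "finite K" "u \<subseteq> K"
  shows "(\<Sum>k\<in>K. if k \<in> u then 1 else 0) = (card u :: nat)"
proof -
  have "(\<Sum>k\<in>K. if k \<in> u then 1 else (0::nat)) = (\<Sum>k\<in>K \<inter> u. 1)"
    using assms(1) by (simp add: sum.If_cases)
  also have "K \<inter> u = u" using assms(2) by auto
  finally show ?thesis by simp
qed

lemma sum_upd_int:
  assumes "j \<in> K" "finite K"
  shows "int (\<Sum>i\<in>K. (f(j := x)) i) = int (\<Sum>i\<in>K. f i) - int (f j) + int x"
proof -
  have "(\<Sum>i\<in>K. (f(j := x)) i) = x + (\<Sum>i\<in>K - {j}. f i)"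
    using assms by (simp add: sum.remove)
  moreover have "(\<Sum>i\<in>K. f i) = f j + (\<Sum>i\<in>K - {j}. f i)"
    using assms by (simp add: sum.remove)
  ultimately show ?thesis by simp
qed

context dctx
begin

lemma sat_s':
  assumes E: "evenW p m n t E" and a: "a \<in> {1..m}" and nz: "D (evb E) c \<noteq> 0"
    and c0: "fst c a = 0" and sat: "fst E a = p ^ t a - 1"
  shows "snd (snd c) = a"
proof (rule ccontr)
  assume ne: "snd (snd c) \<noteq> a"
  have ta: "t a \<ge> 1" using tpos a by blast
  have "p ^ t a \<ge> 1" using p1 by simp
  then have o: "of_nat (p ^ t a - 1) = (-1::'a)"
    using ofp ta by (simp add: of_nat_diff power_0_left)
  have "of_nat (fst E a) - (if snd (snd E) = a then 1 else 0) = (of_nat (fst c a) - (if snd (snd c) = a then 1 else 0) :: 'a)"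
    using EWt[OF E a nz] .
  then have "(-1::'a) - (if snd (snd E) = a then 1 else 0) = 0" using o sat c0 ne by simp
  moreover have "(2::'a) \<noteq> 0" using small_ne[of 2] p3 by simp
  ultimately show False by (cases "snd (snd E) = a") (auto simp: algebra_simps)
qed

end


context dctx
begin

lemma step:
  assumes E: "evenW p m n t E"
    and IH: "\<And>b. evenW p m n t b \<Longrightarrow> wdeg m b < wdeg m E \<Longrightarrow> D (evb b) = (\<lambda>_. 0)"
    and nb: "\<And>i. i \<in> {1..m} \<Longrightarrow> E \<noteq> ((\<lambda>_. 0)(i := p ^ r), {}, i)"
  shows "D (evb E) = (\<lambda>_. 0)"
proof (rule ccontr)
  define q where "q = p ^ r"
  have q3': "q > 3" using q3 by (simp add: q_def)
  have ofq': "of_nat q = (0::'a)" using ofq by (simp add: q_def)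
  assume "D (evb E) \<noteq> (\<lambda>_. 0)"
  then obtain c where nz: "D (evb E) c \<noteq> 0" by (meson ext)
  obtain \<alpha> u s where Ee: "E = (\<alpha>, u, s)" by (cases E) auto
  have A: "(\<alpha>, u) \<in> Aidx p m n t" "s \<in> {1..m+n}" "even (card u + tau m s)"
    using E by (auto simp: Ee evenW_def Widx_iff)
  have EWI: "(\<alpha>, u, s) \<in> Widx p m n t" using A by (simp add: Widx_iff)
  have uY: "u \<subseteq> {m+1..m+n}" using A by (simp add: Aidx_iff)
  have g0: "fst c = (\<lambda>_. 0)" using alpha_free[OF E IH nz] by blast
  obtain w s' where c: "c = (\<lambda>_. 0, w, s')" using g0 by (cases c) auto
  have FW: "D (evb E) \<in> Wcomp p m n t (wdeg m E - int q)" using DH[OF evb_Wcomp[OF E]] by (simp add: q_def)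
  have cW: "c \<in> Widx p m n t" using FW nz by (auto simp: Wcomp_def Weven_def c)
  have wY: "w \<subseteq> {m+1..m+n}" and s'r: "s' \<in> {1..m+n}" using cW by (auto simp: c Widx_iff Aidx_iff)
  have dc: "wdeg m c = wdeg m E - int q" using FW nz unfolding c by (auto simp: Wcomp_def)
  define S where "S = (\<Sum>j\<in>{1..m}. \<alpha> j)"
  have DG: "int (card w) = int S + int (card u) - int q"
    using dc by (simp add: c Ee wdeg_def S_def del: of_nat_sum)
  have EW: "of_nat (\<alpha> a) - (if s = a then 1 else 0) = (0 - (if s' = a then 1 else 0) :: 'a)" if "a \<in> {1..m}" for a
    using EWt[OF E that nz] by (simp add: Ee c)
  have OWn: "(if k \<in> u then 1 else 0) + (if s' = k then 1 else 0) = (if k \<in> w then 1 else 0) + (if s = k then 1 else (0::nat))"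
    if k: "k \<in> {m+1..m+n}" for k
  proof -
    have "(if k \<in> u then 1 else 0) - (if s = k then 1 else 0) = ((if k \<in> w then 1 else 0) - (if s' = k then 1 else 0) :: 'a)"
      using OWt[OF E k nz] by (simp add: Ee c)
    then have X: "of_nat ((if k \<in> u then 1 else 0) + (if s' = k then 1 else 0)) = (of_nat ((if k \<in> w then 1 else 0) + (if s = k then 1 else (0::nat))) :: 'a)"
      by (simp add: algebra_simps split: if_splits)
    show ?thesis by (rule small_inj[OF ch _ _ X]) (use p3 in auto)
  qed
  have sumOW: "card u + (if s' \<in> {m+1..m+n} then 1 else 0) = card w + (if s \<in> {m+1..m+n} then 1 else (0::nat))"
  proof -
    have "(\<Sum>k\<in>{m+1..m+n}. (if k \<in> u then 1 else 0) + (if s' = k then 1 else (0::nat)))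
        = (\<Sum>k\<in>{m+1..m+n}. (if k \<in> w then 1 else 0) + (if s = k then 1 else 0))"
      using OWn by (intro sum.cong) auto
    then show ?thesis
      unfolding sum.distrib sum_indicator_card[OF finite_atLeastAtMost uY] sum_indicator_card[OF finite_atLeastAtMost wY]
      by (simp only: sum.delta'[OF finite_atLeastAtMost])
  qed
  have Sa: "int S = int q + (if s' \<in> {m+1..m+n} then 1 else 0) - (if s \<in> {m+1..m+n} then 1 else 0)"
    using DG sumOW by (auto split: if_splits)
  have aleS: "\<alpha> j \<le> S" if "j \<in> {1..m}" for j
    unfolding S_def using that by (intro member_le_sum) auto
  have aB: "\<alpha> j \<le> p ^ t j - 1" if "j \<in> {1..m}" for j using A that by (auto simp: Aidx_iff)
  have F0: "D (evb E) = (\<lambda>_. 0)"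
  proof (cases "\<exists>i\<in>{1..m}. q \<le> \<alpha> i")
    case True
    then obtain i where i: "i \<in> {1..m}" "q \<le> \<alpha> i" by blast
    have aiq: "\<alpha> i \<le> q + 1" using aleS[OF i(1)] Sa by (auto split: if_splits)
    have qi: "p ^ r \<le> p ^ t i - 1" using i aB[OF i(1)] by (simp add: q_def)
    define G where "G = ((\<lambda>_. 0::nat)(i := p ^ r), {}::nat set, i)"
    have GA: "((\<lambda>_. 0::nat)(i := p ^ r), {}::nat set) \<in> Aidx p m n t" using i qi by (auto simp: Aidx_iff)
    have G: "evenW p m n t G" using GA i by (simp add: G_def evenW_def Widx_iff tau_def)
    have DG0: "D (evb G) = (\<lambda>_. 0)" unfolding G_def using base0[OF i(1) qi] .
    define E' where "E' = (\<alpha>(i := \<alpha> i - (q - 1)), u, s)"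
    have E'A: "(\<alpha>(i := \<alpha> i - (q - 1)), u) \<in> Aidx p m n t" using Aidx_dec[OF A(1)] .
    have E': "evenW p m n t E'" using E'A A by (simp add: E'_def evenW_def Widx_iff)
    have dE': "wdeg m E' < wdeg m E"
    proof -
      have e: "(\<alpha>(i := \<alpha> i - (q - 1)))(i := (\<alpha>(i := \<alpha> i - (q - 1))) i + (q - 1)) = \<alpha>" using i q3' by (auto simp: fun_eq_iff)
      have "wdeg m E = wdeg m E' + int (q - 1)"
        using wdeg_up[OF i(1), of "\<alpha>(i := \<alpha> i - (q - 1))" "q - 1" u s] unfolding e by (simp add: Ee E'_def)
      then show ?thesis using q3' by simp
    qed
    have DE'0: "D (evb E') = (\<lambda>_. 0)" using IH[OF E' dE'] .
    have k1: "of_nat (\<alpha> i choose q) = (1::'a)"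
    proof (cases "\<alpha> i = q")
      case True then show ?thesis by simp
    next
      case False
      then have "\<alpha> i = Suc q" using i aiq by simp
      then show ?thesis using ofq' by (simp add: binomial_Suc_n)
    qed
    have k2: "of_nat (\<alpha> i choose (\<alpha> i - (q - 1))) = (0::'a)"
    proof (cases "\<alpha> i = q")
      case True
      then have "\<alpha> i - (q - 1) = 1" using q3' by simp
      then show ?thesis using True ofq' by simp
    next
      case False
      then have ai: "\<alpha> i = Suc q" using i aiq by simp
      then have e2: "\<alpha> i - (q - 1) = 2" using q3' by simp
      have "2 * (Suc q choose 2) = Suc q * q" by (simp add: choose_two)
      then have "(of_nat 2 :: 'a) * of_nat (Suc q choose 2) = of_nat (Suc q) * of_nat q"
        by (metis of_nat_mult)
      then have "(of_nat 2 :: 'a) * of_nat (Suc q choose 2) = 0" using ofq' by simp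
      moreover have "(of_nat 2 :: 'a) \<noteq> 0" using small_ne[of 2] p3 by simp
      ultimately show ?thesis using ai e2 by simp
    qed
    have "wbr p m n t (evb G) (evb E') = (evb E :: widx \<Rightarrow> 'a)"
    proof -
      have X: "wbr p m n t (evb G) (evb E') = (\<lambda>c. (of_nat (\<alpha> i choose q) - (if s = i then of_nat (\<alpha> i choose (\<alpha> i - (q - 1))) else 0)) * (evb (\<alpha>, u, s) c :: 'a))"
        unfolding G_def E'_def q_def[symmetric] by (rule decomp1[OF i(1) EWI]) (use q3' i in auto)
      show ?thesis unfolding X k1 k2 by (simp add: Ee)
    qed
    then have "D (evb E) = D (wbr p m n t (evb G) (evb E'))" by simp
    also have "\<dots> = (\<lambda>_. 0)" using DL[OF evb_Weven[OF G] evb_Weven[OF E']] DG0 DE'0 by simp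
    finally show ?thesis .
  next
    case notI: False
    have aq: "\<alpha> j < q" if "j \<in> {1..m}" for j using that notI not_le by blast
    show ?thesis
    proof (cases "\<exists>l\<in>{1..m}. l \<noteq> s \<and> 2 \<le> \<alpha> l")
      case True
      then obtain l where l: "l \<in> {1..m}" "l \<noteq> s" "2 \<le> \<alpha> l" by blast
      have satc: "s' = a" if "a \<in> {1..m}" "\<alpha> a = p ^ t a - 1" for a
        using sat_s'[OF E that(1) nz] that by (simp add: Ee c)
      obtain l' where l': "l' \<in> {1..m}" "l' \<noteq> l" "\<alpha> l' < p ^ t l' - 1"
      proof -
        define l1 where "l1 = (if l = 1 then 2 else (1::nat))"
        define l2 where "l2 = (if l = 3 then 2 else (3::nat))"
        have l12: "l1 \<in> {1..m}" "l2 \<in> {1..m}" "l1 \<noteq> l" "l2 \<noteq> l" "l1 \<noteq> l2"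
          using m3 by (auto simp: l1_def l2_def)
        show ?thesis
        proof (cases "\<alpha> l1 < p ^ t l1 - 1")
          case True then show ?thesis using that l12 by blast
        next
          case F1: False
          show ?thesis
          proof (cases "\<alpha> l2 < p ^ t l2 - 1")
            case True then show ?thesis using that l12 by blast
          next
            case False
            have "s' = l1" using satc[OF l12(1)] F1 aB[OF l12(1)] by simp
            moreover have "s' = l2" using satc[OF l12(2)] False aB[OF l12(2)] by simp
            ultimately show ?thesis using l12 by simp
          qed
        qed
      qed
      define G where "G = ((\<lambda>_. 0::nat)(l := \<alpha> l), {}::nat set, l')"
      have GA: "((\<lambda>_. 0::nat)(l := \<alpha> l), {}::nat set) \<in> Aidx p m n t" using l aB[OF l(1)] by (auto simp: Aidx_iff)
      have G: "evenW p m n t G" using GA l' by (simp add: G_def evenW_def Widx_iff tau_def)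
      have dG: "wdeg m G = int (\<alpha> l) - 1" using l by (simp add: G_def wdeg_def sum.remove)
      have DG0: "D (evb G) = (\<lambda>_. 0)" by (rule D_evb_low[OF G]) (use dG aq[OF l(1)] in \<open>simp add: q_def\<close>)
      define E' where "E' = (\<alpha>(l := 0, l' := \<alpha> l' + 1), u, s)"
      have E'A: "(\<alpha>(l := 0, l' := \<alpha> l' + 1), u) \<in> Aidx p m n t"
        using A(1) l l' unfolding Aidx_iff by auto
      have E': "evenW p m n t E'" using E'A A by (simp add: E'_def evenW_def Widx_iff)
      have dE': "wdeg m E' < wdeg m E"
      proof -
        have "int (\<Sum>j\<in>{1..m}. (\<alpha>(l := 0, l' := \<alpha> l' + 1)) j) = int (\<Sum>j\<in>{1..m}. (\<alpha>(l := 0)) j) - int ((\<alpha>(l := 0)) l') + int (\<alpha> l' + 1)"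
          using sum_upd_int[OF l'(1), of "\<alpha>(l := 0)"] by simp
        also have "int (\<Sum>j\<in>{1..m}. (\<alpha>(l := 0)) j) = int S - int (\<alpha> l)"
          using sum_upd_int[OF l(1), of \<alpha> 0] by (simp add: S_def)
        finally have X: "int (\<Sum>j\<in>{1..m}. (\<alpha>(l := 0, l' := \<alpha> l' + 1)) j) = int S - int (\<alpha> l) - int ((\<alpha>(l := 0)) l') + int (\<alpha> l' + 1)" .
        have Y: "(\<alpha>(l := 0)) l' = \<alpha> l'" using l' by simp
        have "int (\<Sum>j\<in>{1..m}. (\<alpha>(l := 0, l' := \<alpha> l' + 1)) j) = int S - int (\<alpha> l) + 1"
          using X Y by linarith
        then show ?thesis using l(3) by (simp add: E'_def Ee wdeg_def S_def del: of_nat_sum)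
      qed
      have DE'0: "D (evb E') = (\<lambda>_. 0)" using IH[OF E' dE'] .
      have "wbr p m n t (evb G) (evb E') = (evb E :: widx \<Rightarrow> 'a)"
        unfolding G_def E'_def Ee by (rule decomp2[OF l(1) l'(1) l'(2)[symmetric] l(2) EWI E'A])
      then have "D (evb E) = D (wbr p m n t (evb G) (evb E'))" by simp
      also have "\<dots> = (\<lambda>_. 0)" using DL[OF evb_Weven[OF G] evb_Weven[OF E']] DG0 DE'0 by simp
      finally show ?thesis .
    next
      case False
      then have a1: "\<alpha> l \<le> 1" if "l \<in> {1..m}" "l \<noteq> s" for l using that by auto
      have a0: "\<alpha> l = 0 \<and> s' \<noteq> l" if l: "l \<in> {1..m}" "l \<noteq> s" for l
      proof -
        have X: "of_nat (\<alpha> l + (if s' = l then 1 else 0)) = (of_nat 0 :: 'a)"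
          using EW[OF l(1)] l(2) by (auto split: if_splits simp: algebra_simps)
        have "\<alpha> l + (if s' = l then 1 else 0) = 0"
          by (rule small_inj[OF ch _ _ X]) (use a1[OF l] p3 in auto)
        then show ?thesis by (auto split: if_splits)
      qed
      have Sv: "S = (if s \<in> {1..m} then \<alpha> s else 0)"
      proof -
        have "S = (\<Sum>j\<in>{1..m}. if j = s then \<alpha> j else 0)"
          unfolding S_def using a0 by (intro sum.cong) auto
        then show ?thesis by (simp add: sum.delta')
      qed
      have "False"
      proof (cases "s \<in> {1..m}")
        case True
        have "\<alpha> s < q" using aq[OF True] .
        moreover have "s' \<in> {1..m} \<Longrightarrow> s' = s" using a0 by blast
        ultimately show False using Sa Sv True s'r by (auto split: if_splits)
      next
        case False
        then have "s \<in> {m+1..m+n}" using A(2) by auto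
        moreover have "s' \<notin> {1..m}" using a0 False by blast
        ultimately show False using Sa Sv False s'r q3' by (auto split: if_splits)
      qed
      then show ?thesis ..
    qed
  qed
  then show False using nz by simp
qed

end


lemma Weven_add:
  assumes X: "X \<in> Weven p m n t" and Y: "Y \<in> Weven p m n t"
  shows "(\<lambda>c. X c + Y c) \<in> Weven p m n t"
  unfolding Weven_def
proof (intro CollectI conjI allI impI)
  fix b assume "b \<notin> Widx p m n t" then show "X b + Y b = 0" using X Y by (cases b) (auto simp: Weven_def)
next
  fix \<alpha> u r assume nz: "X (\<alpha>, u, r) + Y (\<alpha>, u, r) \<noteq> 0"
  then have "X (\<alpha>, u, r) \<noteq> 0 \<or> Y (\<alpha>, u, r) \<noteq> 0" by auto
  then show "even (card u + tau m r)" using X Y unfolding Weven_def by blast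
qed

lemma Weven_smul: "X \<in> Weven p m n t \<Longrightarrow> (\<lambda>c. a * X c) \<in> Weven p m n t"
  unfolding Weven_def by auto

lemma Weven_expand:
  assumes "X \<in> Weven p m n t"
  shows "(\<lambda>c. \<Sum>b\<in>Widx p m n t. X b * evb b c) = X"
proof
  fix c
  have "(\<Sum>b\<in>Widx p m n t. X b * evb b c) = (\<Sum>b\<in>Widx p m n t. if b = c then X b else 0)"
    by (intro sum.cong) (auto simp: evb_def)
  also have "\<dots> = X c" using assms finite_Widx by (cases c) (auto simp: sum.delta Weven_def)
  finally show "(\<Sum>b\<in>Widx p m n t. X b * evb b c) = X c" .
qed

context dctx
begin

lemma all_basis:
  assumes "evenW p m n t b"
  shows "D (evb b) = (\<lambda>_. 0)"
  using assms
proof (induction "nat (wdeg m b + 1)" arbitrary: b rule: less_induct)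
  case less
  show ?case
  proof (cases "\<exists>i\<in>{1..m}. b = ((\<lambda>_. 0)(i := p ^ r), {}, i)")
    case True
    then obtain i where i: "i \<in> {1..m}" "b = ((\<lambda>_. 0)(i := p ^ r), {}, i)" by blast
    have "((\<lambda>_. 0)(i := p ^ r), {}) \<in> Aidx p m n t" using less.prems i(2) by (simp add: evenW_def Widx_iff)
    then have "\<forall>j. j \<in> {1..m} \<longrightarrow> ((\<lambda>_. 0::nat)(i := p ^ r)) j \<le> p ^ t j - 1" unfolding Aidx_iff by blast
    then have "p ^ r \<le> p ^ t i - 1" using i(1) by (metis fun_upd_same)
    then show ?thesis using base0[OF i(1)] i(2) by simp
  next
    case False
    show ?thesis
    proof (rule step[OF less.prems])
      fix b' assume b': "evenW p m n t b'" "wdeg m b' < wdeg m b"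
      have "nat (wdeg m b' + 1) < nat (wdeg m b + 1)" using b'(2) wdeg_ge[of m b'] by simp
      then show "D (evb b') = (\<lambda>_. 0)" using less.hyps b'(1) by blast
    next
      fix i assume "i \<in> {1..m}" then show "b \<noteq> ((\<lambda>_. 0)(i := p ^ r), {}, i)" using False by blast
    qed
  qed
qed

lemma all_Weven:
  assumes X: "X \<in> Weven p m n t"
  shows "D X = (\<lambda>_. 0)"
proof -
  have M: "K \<subseteq> Widx p m n t \<longrightarrow> (\<lambda>c. \<Sum>b\<in>K. X b * evb b c) \<in> Weven p m n t \<and> D (\<lambda>c. \<Sum>b\<in>K. X b * evb b c) = (\<lambda>_. 0)"
    if "finite K" for K
    using that
  proof (induction K rule: finite_induct)
    case empty
    show ?case using zero_Weven D_zero by simp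
  next
    case (insert b K)
    show ?case
    proof
      assume sub: "insert b K \<subseteq> Widx p m n t"
      let ?T = "\<lambda>c. X b * evb b c"
      let ?R = "\<lambda>c. \<Sum>b\<in>K. X b * evb b c"
      have R: "?R \<in> Weven p m n t" "D ?R = (\<lambda>_. 0)" using insert.IH sub by simp_all
      have T: "?T \<in> Weven p m n t \<and> D ?T = (\<lambda>_. 0)"
      proof (cases "X b = 0")
        case True
        then show ?thesis using zero_Weven D_zero by simp
      next
        case False
        obtain \<beta> v s where bb: "b = (\<beta>, v, s)" by (cases b) auto
        have "evenW p m n t b" using X False sub by (auto simp: Weven_def evenW_def bb)
        then have "evb b \<in> Weven p m n t" "D (evb b) = (\<lambda>_. 0)" using evb_Weven all_basis by blast+
        then show ?thesis using DS[of "evb b" "X b"] Weven_smul by auto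
      qed
      have e: "(\<lambda>c. \<Sum>b\<in>insert b K. X b * evb b c) = (\<lambda>c. ?T c + ?R c)"
        using insert.hyps by (simp add: fun_eq_iff)
      show "(\<lambda>c. \<Sum>b\<in>insert b K. X b * evb b c) \<in> Weven p m n t \<and> D (\<lambda>c. \<Sum>b\<in>insert b K. X b * evb b c) = (\<lambda>_. 0)"
        unfolding e using DA[of ?T ?R] T R Weven_add[of ?T p m n t ?R] by simp
    qed
  qed
  have "D (\<lambda>c. \<Sum>b\<in>Widx p m n t. X b * evb b c) = (\<lambda>_. 0)" using M[OF finite_Widx] by simp
  then show ?thesis unfolding Weven_expand[OF X] .
qed

end


lemma wbr_smul_left: "wbr p m n t (\<lambda>b. a * X b) Y = (\<lambda>c. a * wbr p m n t X Y c)"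
  by (auto simp: wbr_def fun_eq_iff sum_distrib_left algebra_simps)
lemma wbr_smul_right: "wbr p m n t X (\<lambda>b. a * Y b) = (\<lambda>c. a * wbr p m n t X Y c)"
  by (auto simp: wbr_def fun_eq_iff sum_distrib_left algebra_simps)
lemma wbr_add_left: "wbr p m n t (\<lambda>b. X b + Z b) Y = (\<lambda>c. wbr p m n t X Y c + wbr p m n t Z Y c)"
  by (auto simp: wbr_def fun_eq_iff sum.distrib algebra_simps)
lemma wbr_add_right: "wbr p m n t X (\<lambda>b. Y b + Z b) = (\<lambda>c. wbr p m n t X Y c + wbr p m n t X Z c)"
  by (auto simp: wbr_def fun_eq_iff sum.distrib algebra_simps)
lemma wbr_diff_left: "wbr p m n t (\<lambda>b. X b - Z b) Y = (\<lambda>c. wbr p m n t X Y c - wbr p m n t Z Y c)"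
  by (auto simp: wbr_def fun_eq_iff sum_subtractf algebra_simps)
lemma wbr_diff_right: "wbr p m n t X (\<lambda>b. Y b - Z b) = (\<lambda>c. wbr p m n t X Y c - wbr p m n t X Z c)"
  by (auto simp: wbr_def fun_eq_iff sum_subtractf algebra_simps)
lemma wbr_sum_right:
  "wbr p m n t X (\<lambda>b. \<Sum>i\<in>I. F i b) = (\<lambda>c. \<Sum>i\<in>I. wbr p m n t X (F i) c)"
proof -
  have "wbr p m n t X (\<lambda>b. \<Sum>i\<in>I. F i b) c = (\<Sum>i\<in>I. wbr p m n t X (F i) c)" for c
  proof -
    have "wbr p m n t X (\<lambda>b. \<Sum>i\<in>I. F i b) c = (\<Sum>b1\<in>Widx p m n t. \<Sum>b2\<in>Widx p m n t. \<Sum>i\<in>I. X b1 * F i b2 * wbr_basis p m n t b1 b2 c)"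
      unfolding wbr_def by (simp add: sum_distrib_left sum_distrib_right)
    also have "\<dots> = (\<Sum>i\<in>I. \<Sum>b1\<in>Widx p m n t. \<Sum>b2\<in>Widx p m n t. X b1 * F i b2 * wbr_basis p m n t b1 b2 c)"
    proof -
      have "(\<Sum>i\<in>I. \<Sum>b1\<in>Widx p m n t. \<Sum>b2\<in>Widx p m n t. X b1 * F i b2 * wbr_basis p m n t b1 b2 c)
          = (\<Sum>b1\<in>Widx p m n t. \<Sum>b2\<in>Widx p m n t. \<Sum>i\<in>I. X b1 * F i b2 * wbr_basis p m n t b1 b2 c)"
        by (simp only: sum.swap[of _ I])
      then show ?thesis by simp
    qed
    finally show ?thesis by (simp add: wbr_def)
  qed
  then show ?thesis by auto
qed

lemma wbr_lin_left:
  "wbr p m n t (\<lambda>b. \<Sum>i\<in>I. c i * F i b) Y = (\<lambda>x. \<Sum>i\<in>I. c i * wbr p m n t (F i) Y x)"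
  by (simp add: wbr_sum_left wbr_smul_left)
lemma wbr_lin_right:
  "wbr p m n t X (\<lambda>b. \<Sum>i\<in>I. c i * F i b) = (\<lambda>x. \<Sum>i\<in>I. c i * wbr p m n t X (F i) x)"
  by (simp add: wbr_sum_right wbr_smul_right)

lemma Weven_parity: "X \<in> Weven p m n t \<Longrightarrow> X (\<alpha>, u, r) \<noteq> 0 \<Longrightarrow> even (card u + tau m r)"
  by (simp add: Weven_def)

lemma Wcomp_deg: "X \<in> Wcomp p m n t k \<Longrightarrow> X b \<noteq> 0 \<Longrightarrow> wdeg m b = k"
  by (cases b) (simp add: Wcomp_def)

lemma Weven_lincomb:
  assumes "\<And>i. i \<in> I \<Longrightarrow> F i \<in> Weven p m n t"
  shows "(\<lambda>b. \<Sum>i\<in>I. c i * F i b) \<in> Weven p m n t"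
  unfolding Weven_def
proof (intro CollectI conjI allI impI)
  fix b assume b: "b \<notin> Widx p m n t"
  have "F i b = 0" if "i \<in> I" for i using Weven_Widx[OF assms[OF that]] b by blast
  then show "(\<Sum>i\<in>I. c i * F i b) = 0" by simp
next
  fix \<alpha> u r assume "(\<Sum>i\<in>I. c i * F i (\<alpha>, u, r)) \<noteq> 0"
  then obtain i where i: "i \<in> I" "c i * F i (\<alpha>, u, r) \<noteq> 0" using sum.not_neutral_contains_not_neutral by blast
  then have "F i (\<alpha>, u, r) \<noteq> 0" by simp
  then show "even (card u + tau m r)" using Weven_parity[OF assms[OF i(1)]] by blast
qed

lemma Wcomp_lincomb:
  assumes "\<And>i. i \<in> I \<Longrightarrow> F i \<in> Wcomp p m n t k"
  shows "(\<lambda>b. \<Sum>i\<in>I. c i * F i b) \<in> Wcomp p m n t k"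
proof -
  have "(\<lambda>b. \<Sum>i\<in>I. c i * F i b) \<in> Weven p m n t"
    by (rule Weven_lincomb) (use assms in \<open>simp add: Wcomp_def\<close>)
  moreover have "wdeg m b = k" if nz: "(\<Sum>i\<in>I. c i * F i b) \<noteq> 0" for b
  proof -
    obtain i where i: "i \<in> I" "c i * F i b \<noteq> 0" using sum.not_neutral_contains_not_neutral[OF nz] by blast
    then have "F i b \<noteq> 0" by simp
    then show ?thesis using Wcomp_deg[OF assms[OF i(1)]] by blast
  qed
  ultimately show ?thesis unfolding Wcomp_def by blast
qed

lemma Weven_diff: "X \<in> Weven p m n t \<Longrightarrow> Y \<in> Weven p m n t \<Longrightarrow> (\<lambda>c. X c - Y c) \<in> Weven p m n t"
  using Weven_add[of X p m n t "\<lambda>c. (-1) * Y c"] Weven_smul[of Y p m n t "-1"] by simp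

lemma Wcomp_diff:
  assumes "X \<in> Wcomp p m n t k" "Y \<in> Wcomp p m n t k"
  shows "(\<lambda>c. X c - Y c) \<in> Wcomp p m n t k"
proof -
  have "(\<lambda>c. X c - Y c) \<in> Weven p m n t" using assms Weven_diff by (auto simp: Wcomp_def)
  moreover have "wdeg m b = k" if "X b - Y b \<noteq> 0" for b
    using that Wcomp_deg[OF assms(1)] Wcomp_deg[OF assms(2)] by (cases "X b = 0") auto
  ultimately show ?thesis by (simp add: Wcomp_def)
qed


theorem proposition3p2p10:
  fixes p m n r :: nat and t :: "nat \<Rightarrow> nat"
    and D :: "((nat \<Rightarrow> nat) \<times> nat set \<times> nat \<Rightarrow> 'a::field) \<Rightarrow> ((nat \<Rightarrow> nat) \<times> nat set \<times> nat \<Rightarrow> 'a)"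
  assumes "CHAR('a) = p" and "p > 3"
    and "m \<ge> 3" and "n \<ge> 3"
    and "\<forall>i\<in>{1..m}. t i \<ge> 1"
    and "r \<ge> 1"
  shows "D \<in> Der_neg p m n t (p ^ r) \<longleftrightarrow>
         (\<exists>c :: nat \<Rightarrow> 'a. \<forall>X\<in>Weven p m n t.
             D X = (\<lambda>b. \<Sum>i\<in>{1..m}. c i * ((wbr p m n t (Dvec i)) ^^ (p ^ r)) X b))"
proof -
  note ch = assms(1) and p3 = assms(2) and m3 = assms(3) and tpos = assms(5) and r1 = assms(6)
  have p1: "p > 1" using p3 by simp
  have q0: "p ^ r > 0" using p1 by simp
  let ?T = "\<lambda>i. (wbr p m n t (Dvec i)) ^^ (p ^ r)"
  have Tsh: "?T i X = shiftW p m n t i (p ^ r) X" if "i \<in> {1..m}" for i and X :: "widx \<Rightarrow> 'a"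
    using T_shift[OF that q0] .
  have TW: "?T i X \<in> Weven p m n t" if "i \<in> {1..m}" "X \<in> Weven p m n t" for i and X :: "widx \<Rightarrow> 'a"
    unfolding Tsh[OF that(1)] using shiftW_Weven[OF that(2)] .
  have TC: "?T i X \<in> Wcomp p m n t (j - int (p ^ r))" if "i \<in> {1..m}" "X \<in> Wcomp p m n t j" for i j and X :: "widx \<Rightarrow> 'a"
    unfolding Tsh[OF that(1)] using shiftW_Wcomp[OF that(2,1)] .
  have Tadd: "?T i (\<lambda>c. X c + Y c) b = ?T i X b + ?T i Y b" if "i \<in> {1..m}" for i b and X Y :: "widx \<Rightarrow> 'a"
    unfolding Tsh[OF that] shiftW_add by simp
  have Tsmul: "?T i (\<lambda>c. a * X c) b = a * ?T i X b" if "i \<in> {1..m}" for i b a and X :: "widx \<Rightarrow> 'a"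
    unfolding Tsh[OF that] shiftW_smul by simp
  have TL: "?T i (wbr p m n t X Y) b = wbr p m n t (?T i X) Y b + wbr p m n t X (?T i Y) b" if "i \<in> {1..m}" for i b and X Y :: "widx \<Rightarrow> 'a"
    by (simp only: T_leibniz[OF that ch p1])
  show ?thesis
  proof
    assume Dd: "D \<in> Der_neg p m n t (p ^ r)"
    have DW: "\<And>X. X \<in> Weven p m n t \<Longrightarrow> D X \<in> Weven p m n t" using Dd by (simp add: Der_neg_def)
    have DA: "\<And>X Y. X \<in> Weven p m n t \<Longrightarrow> Y \<in> Weven p m n t \<Longrightarrow> D (\<lambda>c. X c + Y c) = (\<lambda>c. D X c + D Y c)"
      using Dd by (simp add: Der_neg_def)
    have DS: "\<And>a X. X \<in> Weven p m n t \<Longrightarrow> D (\<lambda>c. a * X c) = (\<lambda>c. a * D X c)" using Dd by (simp add: Der_neg_def)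
    have DL: "\<And>X Y. X \<in> Weven p m n t \<Longrightarrow> Y \<in> Weven p m n t \<Longrightarrow>
        D (wbr p m n t X Y) = (\<lambda>c. wbr p m n t (D X) Y c + wbr p m n t X (D Y) c)"
      using Dd by (simp add: Der_neg_def)
    have DH: "\<And>j X. X \<in> Wcomp p m n t j \<Longrightarrow> D X \<in> Wcomp p m n t (j - int (p ^ r))" using Dd by (simp add: Der_neg_def)
    define c where "c i = D (evb ((\<lambda>_. 0)(i := p ^ r), {}, i)) (\<lambda>_. 0, {}, i)" for i
    define D' where "D' X = (\<lambda>b. D X b - (\<Sum>i\<in>{1..m}. c i * ?T i X b))" for X
    have loc: "dctx p m n r t D'"
    proof (unfold_locales)
      show "CHAR('a) = p" "3 < p" "3 \<le> m" "\<forall>i\<in>{1..m}. 1 \<le> t i" "1 \<le> r" using assms by auto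
    next
      fix X Y :: "widx \<Rightarrow> 'a" assume X: "X \<in> Weven p m n t" and Y: "Y \<in> Weven p m n t"
      have s1: "(\<Sum>i\<in>{1..m}. c i * ?T i (wbr p m n t X Y) b) = (\<Sum>i\<in>{1..m}. c i * wbr p m n t (?T i X) Y b) + (\<Sum>i\<in>{1..m}. c i * wbr p m n t X (?T i Y) b)" for b
      proof -
        have "(\<Sum>i\<in>{1..m}. c i * ?T i (wbr p m n t X Y) b) = (\<Sum>i\<in>{1..m}. c i * wbr p m n t (?T i X) Y b + c i * wbr p m n t X (?T i Y) b)"
          by (intro sum.cong refl) (simp add: TL distrib_left)
        then show ?thesis by (simp add: sum.distrib)
      qed
      show "D' (wbr p m n t X Y) = (\<lambda>c. wbr p m n t (D' X) Y c + wbr p m n t X (D' Y) c)"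
        unfolding D'_def wbr_diff_left wbr_diff_right wbr_lin_left wbr_lin_right DL[OF X Y]
        by (rule ext, simp only: s1) (simp add: algebra_simps)
    next
      fix a and X :: "widx \<Rightarrow> 'a" assume X: "X \<in> Weven p m n t"
      have s1: "(\<Sum>i\<in>{1..m}. c i * ?T i (\<lambda>c. a * X c) b) = a * (\<Sum>i\<in>{1..m}. c i * ?T i X b)" for b
      proof -
        have "(\<Sum>i\<in>{1..m}. c i * ?T i (\<lambda>c. a * X c) b) = (\<Sum>i\<in>{1..m}. a * (c i * ?T i X b))"
          by (intro sum.cong refl) (simp add: Tsmul algebra_simps)
        then show ?thesis by (simp add: sum_distrib_left)
      qed
      show "D' (\<lambda>c. a * X c) = (\<lambda>c. a * D' X c)"
        unfolding D'_def DS[OF X] by (rule ext, simp only: s1) (simp add: algebra_simps)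
    next
      fix X Y :: "widx \<Rightarrow> 'a" assume X: "X \<in> Weven p m n t" and Y: "Y \<in> Weven p m n t"
      have s1: "(\<Sum>i\<in>{1..m}. c i * ?T i (\<lambda>c. X c + Y c) b) = (\<Sum>i\<in>{1..m}. c i * ?T i X b) + (\<Sum>i\<in>{1..m}. c i * ?T i Y b)" for b
      proof -
        have "(\<Sum>i\<in>{1..m}. c i * ?T i (\<lambda>c. X c + Y c) b) = (\<Sum>i\<in>{1..m}. c i * ?T i X b + c i * ?T i Y b)"
          by (intro sum.cong refl) (simp add: Tadd distrib_left)
        then show ?thesis by (simp add: sum.distrib)
      qed
      show "D' (\<lambda>c. X c + Y c) = (\<lambda>c. D' X c + D' Y c)"
        unfolding D'_def DA[OF X Y] by (rule ext, simp only: s1) (simp add: algebra_simps)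
    next
      fix j and X :: "widx \<Rightarrow> 'a" assume X: "X \<in> Wcomp p m n t j"
      show "D' X \<in> Wcomp p m n t (j - int (p ^ r))"
        unfolding D'_def by (rule Wcomp_diff[OF DH[OF X] Wcomp_lincomb]) (rule TC[OF _ X], simp)
    next
      fix i assume i: "i \<in> {1..m}" and qi: "p ^ r \<le> p ^ t i - 1"
      let ?E = "((\<lambda>_. 0::nat)(i := p ^ r), {}::nat set, i)"
      have EW: "?E \<in> Widx p m n t" using i qi by (auto simp: Widx_iff Aidx_iff)
      have Tv: "?T l (evb ?E) (\<lambda>_. 0, {}, i) = (if l = i then 1 else (0::'a))" if l: "l \<in> {1..m}" for l
      proof (cases "l = i")
        case True
        then show ?thesis unfolding Tsh[OF l] using EW by (simp add: shiftW_def evb_def)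
      next
        case False
        have "(\<lambda>_. 0::nat)(l := p ^ r) \<noteq> (\<lambda>_. 0)(i := p ^ r)"
        proof
          assume "(\<lambda>_. 0::nat)(l := p ^ r) = (\<lambda>_. 0)(i := p ^ r)"
          then have "((\<lambda>_. 0::nat)(l := p ^ r)) l = ((\<lambda>_. 0)(i := p ^ r)) l" by simp
          then show False using False q0 by simp
        qed
        then show ?thesis unfolding Tsh[OF l] using False by (simp add: shiftW_def evb_def)
      qed
      have "(\<Sum>l\<in>{1..m}. c l * ?T l (evb ?E) (\<lambda>_. 0, {}, i)) = (\<Sum>l\<in>{1..m}. if l = i then c l else 0)"
        by (intro sum.cong refl) (simp add: Tv)
      also have "\<dots> = c i" using i by simp
      finally show "D' (evb ?E) (\<lambda>_. 0, {}, i) = 0" unfolding D'_def by (simp add: c_def)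
    qed
    show "\<exists>c :: nat \<Rightarrow> 'a. \<forall>X\<in>Weven p m n t. D X = (\<lambda>b. \<Sum>i\<in>{1..m}. c i * ((wbr p m n t (Dvec i)) ^^ (p ^ r)) X b)"
    proof (intro exI ballI)
      fix X :: "widx \<Rightarrow> 'a" assume X: "X \<in> Weven p m n t"
      have "D' X = (\<lambda>_. 0)" using dctx.all_Weven[OF loc X] .
      then show "D X = (\<lambda>b. \<Sum>i\<in>{1..m}. c i * ((wbr p m n t (Dvec i)) ^^ (p ^ r)) X b)"
        unfolding D'_def by (simp add: fun_eq_iff)
    qed
  next
    assume "\<exists>c :: nat \<Rightarrow> 'a. \<forall>X\<in>Weven p m n t. D X = (\<lambda>b. \<Sum>i\<in>{1..m}. c i * ((wbr p m n t (Dvec i)) ^^ (p ^ r)) X b)"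
    then obtain c :: "nat \<Rightarrow> 'a" where H: "\<And>X. X \<in> Weven p m n t \<Longrightarrow> D X = (\<lambda>b. \<Sum>i\<in>{1..m}. c i * ?T i X b)" by blast
    show "D \<in> Der_neg p m n t (p ^ r)"
      unfolding Der_neg_def
    proof (intro CollectI conjI ballI allI)
      fix X :: "widx \<Rightarrow> 'a" assume X: "X \<in> Weven p m n t"
      show "D X \<in> Weven p m n t" unfolding H[OF X] by (rule Weven_lincomb) (rule TW[OF _ X], simp)
    next
      fix X Y :: "widx \<Rightarrow> 'a" assume X: "X \<in> Weven p m n t" and Y: "Y \<in> Weven p m n t"
      show "D (\<lambda>c. X c + Y c) = (\<lambda>c. D X c + D Y c)"
        unfolding H[OF Weven_add[OF X Y]] H[OF X] H[OF Y]
        by (rule ext) (simp add: Tadd sum.distrib[symmetric] distrib_left)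
    next
      fix a and X :: "widx \<Rightarrow> 'a" assume X: "X \<in> Weven p m n t"
      show "D (\<lambda>c. a * X c) = (\<lambda>c. a * D X c)"
        unfolding H[OF Weven_smul[OF X]] H[OF X]
        by (rule ext) (simp add: Tsmul sum_distrib_left algebra_simps)
    next
      fix X Y :: "widx \<Rightarrow> 'a" assume X: "X \<in> Weven p m n t" and Y: "Y \<in> Weven p m n t"
      have s2: "(\<Sum>i\<in>{1..m}. c i * ?T i (wbr p m n t X Y) b) = (\<Sum>i\<in>{1..m}. c i * wbr p m n t (?T i X) Y b) + (\<Sum>i\<in>{1..m}. c i * wbr p m n t X (?T i Y) b)" for b
      proof -
        have "(\<Sum>i\<in>{1..m}. c i * ?T i (wbr p m n t X Y) b) = (\<Sum>i\<in>{1..m}. c i * wbr p m n t (?T i X) Y b + c i * wbr p m n t X (?T i Y) b)"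
          by (intro sum.cong refl) (simp add: TL distrib_left)
        then show ?thesis by (simp add: sum.distrib)
      qed
      show "D (wbr p m n t X Y) = (\<lambda>c. wbr p m n t (D X) Y c + wbr p m n t X (D Y) c)"
        unfolding H[OF wbr_Weven[OF X Y]] H[OF X] H[OF Y] wbr_lin_left wbr_lin_right
        by (rule ext) (simp only: s2)
    next
      fix j and X :: "widx \<Rightarrow> 'a" assume X: "X \<in> Wcomp p m n t j"
      have XW: "X \<in> Weven p m n t" using X by (simp add: Wcomp_def)
      show "D X \<in> Wcomp p m n t (j - int (p ^ r))"
        unfolding H[OF XW] by (rule Wcomp_lincomb) (rule TC[OF _ X], simp)
    qed
  qed
qed


end
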